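(* Let $\mathrm{st}(x_1,\dots,x_n)$ be the monoid of $K$-algebra endomorphisms $g$ of $\mathbb{S}_n$ with $g(x_i)=x_i$ for all $i$. Then $\mathrm{st}(x_1,\dots,x_n)$ is an abelian monoid, each non-identity element of it is an injective endomorphism of $\mathbb{S}_n$ that is not an automorphism, and it consists precisely of the endomorphisms $\sigma_p$ given by $\sigma_p(x_i)=x_i$, $\sigma_p(y_i)=y_i+p_i(1-x_iy_i)$ ($i=1,\dots,n$), where $p=(p_1,\dots,p_n)\in K[x_1,\dots,x_n]^n$ ranges over the $n$-tuples satisfying, for every pair $i\ne j$, $$-x_j^{-1}(p_i-p_{i,j})+x_i^{-1}(p_j-p_{j,i})+p_ip_{j,i}-p_jp_{i,j}=0,\qquad p_{i,j}:=p_i|_{x_j=0}$$ (here $x_j^{-1}(p_i-p_{i,j})$ denotes the polynomial quotient).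
   Context: $K$ is a field of characteristic zero. $\mathbb{S}_n$ is the $K$-algebra generated by $x_1,\dots,x_n,y_1,\dots,y_n$ with defining relations $y_ix_i=1$ and $[x_i,y_j]=[x_i,x_j]=[y_i,y_j]=0$ for $i\ne j$; $K[x_1,\dots,x_n]$ is the subalgebra generated by the $x_i$ (a polynomial algebra). *)

theory Defs
  imports "HOL-Library.Poly_Mapping"
begin

text \<open>Generators: letter (i, True) stands for x_i, letter (i, False) for y_i,
  where i ranges over the finite index type 'n (so n = CARD('n)).
  S_n is the monoid algebra over K of the monoid presented by the same generators
  and relations; this is exactly the K-algebra presented by these generators and
  (monomial) relations.\<close>

inductive scong :: "('n \<times> bool) list \<Rightarrow> ('n \<times> bool) list \<Rightarrow> bool" where
  yx: "scong [(i, False), (i, True)] []"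
| xy: "i \<noteq> j \<Longrightarrow> scong [(i, True), (j, False)] [(j, False), (i, True)]"
| xx: "i \<noteq> j \<Longrightarrow> scong [(i, True), (j, True)] [(j, True), (i, True)]"
| yy: "i \<noteq> j \<Longrightarrow> scong [(i, False), (j, False)] [(j, False), (i, False)]"
| refl: "scong u u"
| sym: "scong u v \<Longrightarrow> scong v u"
| trans: "scong u v \<Longrightarrow> scong v w \<Longrightarrow> scong u w"
| ctx: "scong u v \<Longrightarrow> scong (a @ u @ b) (a @ v @ b)"

lemma scong_equivp: "equivp scong"
  by (rule equivpI; auto simp: reflp_def symp_def transp_def intro: scong.intros)

quotient_type 'n smon = "('n \<times> bool) list" / scong
  by (rule scong_equivp)

lemma scong_append:
  assumes "scong u u'" "scong v v'" shows "scong (u @ v) (u' @ v')"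
proof -
  have "scong ([] @ u @ v) ([] @ u' @ v)" by (rule scong.ctx[OF assms(1)])
  moreover have "scong (u' @ v @ []) (u' @ v' @ [])" by (rule scong.ctx[OF assms(2)])
  ultimately show ?thesis by (auto intro: scong.trans)
qed

instantiation smon :: (type) monoid_add
begin
lift_definition zero_smon :: "'a smon" is "[]" .
lift_definition plus_smon :: "'a smon \<Rightarrow> 'a smon \<Rightarrow> 'a smon" is "(@)"
  by (rule scong_append)
instance by standard (transfer, simp add: scong.refl)+
end

text \<open>The algebra S_n with coefficients in K (written additively on monomials,
  but the monoid is noncommutative; multiplication is convolution).\<close>
type_synonym ('n, 'k) S = "'n smon \<Rightarrow>\<^sub>0 'k"

lift_definition letter :: "'n \<times> bool \<Rightarrow> 'n smon" is "\<lambda>a. [a]" .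

definition X :: "'n \<Rightarrow> ('n, 'k::ring_1) S" where
  "X i = Poly_Mapping.single (letter (i, True)) 1"

definition Y :: "'n \<Rightarrow> ('n, 'k::ring_1) S" where
  "Y i = Poly_Mapping.single (letter (i, False)) 1"

definition sscal :: "'k \<Rightarrow> ('n, 'k::ring_1) S \<Rightarrow> ('n, 'k) S" where
  "sscal c a = Poly_Mapping.map (\<lambda>b. c * b) a"

definition alg_endo :: "(('n, 'k::ring_1) S \<Rightarrow> ('n, 'k) S) \<Rightarrow> bool" where
  "alg_endo g \<longleftrightarrow> (\<forall>a b. g (a + b) = g a + g b) \<and> (\<forall>c a. g (sscal c a) = sscal c (g a))
     \<and> (\<forall>a b. g (a * b) = g a * g b) \<and> g 1 = 1"

definition st :: "(('n, 'k::ring_1) S \<Rightarrow> ('n, 'k) S) set" where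
  "st = {g. alg_endo g \<and> (\<forall>i. g (X i) = X i)}"

type_synonym ('n, 'k) P = "('n \<Rightarrow>\<^sub>0 nat) \<Rightarrow>\<^sub>0 'k"

text \<open>A fixed enumeration of the (finite) index type, used only to write x^alpha as a word;
  the order is irrelevant since the x_i commute in S_n.\<close>
definition idx_list :: "'n::finite list" where
  "idx_list = (SOME xs. set xs = UNIV \<and> distinct xs)"

definition xword :: "('n::finite \<Rightarrow>\<^sub>0 nat) \<Rightarrow> 'n smon" where
  "xword \<alpha> = abs_smon (concat (map (\<lambda>i. replicate (Poly_Mapping.lookup \<alpha> i) (i, True)) idx_list))"

definition emb :: "('n::finite, 'k::ring_1) P \<Rightarrow> ('n, 'k) S" where
  "emb p = (\<Sum>\<alpha>\<in>Poly_Mapping.keys p. Poly_Mapping.single (xword \<alpha>) (Poly_Mapping.lookup p \<alpha>))"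

lift_definition subst0 :: "'n \<Rightarrow> ('n, 'k::zero) P \<Rightarrow> ('n, 'k) P" is
  "\<lambda>j f \<alpha>. if Poly_Mapping.lookup \<alpha> j = 0 then f \<alpha> else 0"
  by (erule finite_subset[rotated]) auto

text \<open>Exact division by x_j of a polynomial all of whose monomials contain x_j:
  the coefficient of x^alpha in the quotient is that of x^alpha x_j in the dividend.\<close>
lift_definition divx :: "'n \<Rightarrow> ('n, 'k::zero) P \<Rightarrow> ('n, 'k) P" is
  "\<lambda>j f \<alpha>. f (\<alpha> + Poly_Mapping.single j 1)"
proof -
  fix j :: 'n and f :: "('n \<Rightarrow>\<^sub>0 nat) \<Rightarrow> 'k"
  assume "finite {x. f x \<noteq> 0}"
  moreover have "inj (\<lambda>\<alpha>::'n \<Rightarrow>\<^sub>0 nat. \<alpha> + Poly_Mapping.single j 1)"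
    by (auto simp: inj_def)
  ultimately have "finite ((\<lambda>\<alpha>. \<alpha> + Poly_Mapping.single j 1) -` {x. f x \<noteq> 0})"
    by (rule finite_vimageI)
  then show "finite {\<alpha>. f (\<alpha> + Poly_Mapping.single j 1) \<noteq> 0}" by (simp add: vimage_def)
qed

definition st_cond :: "('n \<Rightarrow> ('n, 'k::comm_ring_1) P) \<Rightarrow> bool" where
  "st_cond p \<longleftrightarrow> (\<forall>i j. i \<noteq> j \<longrightarrow>
      - divx j (p i - subst0 j (p i)) + divx i (p j - subst0 i (p j))
      + p i * subst0 i (p j) - p j * subst0 j (p i) = 0)"

definition is_sigma :: "('n::finite \<Rightarrow> ('n, 'k::comm_ring_1) P) \<Rightarrow> (('n, 'k) S \<Rightarrow> ('n, 'k) S) \<Rightarrow> bool" where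
  "is_sigma p g \<longleftrightarrow> (\<forall>i. g (X i) = X i \<and> g (Y i) = Y i + emb (p i) * (1 - X i * Y i))"

end

theory Submission
  imports Defs
begin

section \<open>Normal forms for the monoid\<close>

definition bm :: "nat \<times> nat \<Rightarrow> nat \<times> nat \<Rightarrow> nat \<times> nat" where
  "bm u v = (if fst v \<le> snd u then (fst u, snd u - fst v + snd v) else (fst u + fst v - snd u, snd v))"

lemma bm_assoc: "bm (bm u v) w = bm u (bm v w)"
  by (cases u; cases v; cases w) (auto simp: bm_def)

lemma bm_0 [simp]: "bm (0,0) u = u" "bm u (0,0) = u"
  by (cases u, simp add: bm_def)+

definition gen :: "'n \<times> bool \<Rightarrow> 'n \<Rightarrow> nat \<times> nat" where
  "gen l k = (if k = fst l then (if snd l then (1,0) else (0,1)) else (0,0))"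

fun nfw :: "('n \<times> bool) list \<Rightarrow> 'n \<Rightarrow> nat \<times> nat" where
  "nfw [] = (\<lambda>_. (0,0))"
| "nfw (l # w) = (\<lambda>k. bm (gen l k) (nfw w k))"

lemma nfw_append: "nfw (u @ v) = (\<lambda>k. bm (nfw u k) (nfw v k))"
  by (induction u) (auto simp: bm_assoc)

lemma scong_nfw: "scong u v \<Longrightarrow> nfw u = nfw v"
  by (induction rule: scong.induct) (auto simp: fun_eq_iff gen_def bm_def nfw_append)

definition blk :: "('n \<Rightarrow> nat \<times> nat) \<Rightarrow> 'n \<Rightarrow> ('n \<times> bool) list" where
  "blk f i = replicate (fst (f i)) (i, True) @ replicate (snd (f i)) (i, False)"

lemma idx_list: "set (idx_list :: 'n::finite list) = UNIV \<and> distinct (idx_list :: 'n list)"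
proof -
  have "\<exists>xs. set xs = (UNIV :: 'n set) \<and> distinct xs" by (rule finite_distinct_list) simp
  then show ?thesis unfolding idx_list_def by (rule someI_ex)
qed

definition cw :: "('n::finite \<Rightarrow> nat \<times> nat) \<Rightarrow> ('n \<times> bool) list" where
  "cw f = concat (map (blk f) idx_list)"

lemma nfw_rep_x: "nfw (replicate a (i, True)) = (\<lambda>k. if k = i then (a, 0) else (0,0))"
  by (induction a) (auto simp: fun_eq_iff gen_def bm_def)

lemma nfw_rep_y: "nfw (replicate b (i, False)) = (\<lambda>k. if k = i then (0, b) else (0,0))"
  by (induction b) (auto simp: fun_eq_iff gen_def bm_def)

lemma nfw_blk: "nfw (blk f i) = (\<lambda>k. if k = i then f i else (0,0))"
  by (cases "f i") (auto simp: blk_def nfw_append nfw_rep_x nfw_rep_y fun_eq_iff bm_def)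

lemma nfw_concat_blk: "distinct L \<Longrightarrow> nfw (concat (map (blk f) L)) = (\<lambda>k. if k \<in> set L then f k else (0,0))"
  by (induction L) (auto simp: nfw_append nfw_blk fun_eq_iff)

lemma nfw_cw [simp]: "nfw (cw f) = f"
proof -
  have "distinct (idx_list :: 'a list)" "set (idx_list :: 'a list) = UNIV" using idx_list by auto
  then show ?thesis by (simp add: cw_def nfw_concat_blk)
qed

lemma scong_ctx2: "scong u v \<Longrightarrow> scong (a @ u @ b) (a @ v @ b)"
  by (rule scong.ctx)

lemma scong_letters: "i \<noteq> j \<Longrightarrow> scong [(i, t), (j, s)] [(j, s), (i, t)]"
  by (cases t; cases s) (auto intro: scong.intros)

lemma scong_pass: "(\<forall>l\<in>set ws. fst l \<noteq> i) \<Longrightarrow> scong ((i,t) # ws) (ws @ [(i,t)])"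
proof (induction ws)
  case Nil then show ?case by (simp add: scong.refl)
next
  case (Cons l ws)
  obtain j s where l: "l = (j, s)" by (cases l)
  with Cons have ij: "i \<noteq> j" by auto
  have "scong ([] @ [(i,t), (j,s)] @ ws) ([] @ [(j,s), (i,t)] @ ws)"
    by (rule scong.ctx, rule scong_letters[OF ij])
  moreover have "scong ([(j,s)] @ ((i,t) # ws) @ []) ([(j,s)] @ (ws @ [(i,t)]) @ [])"
    by (rule scong.ctx) (use Cons in auto)
  ultimately show ?case using l by (auto intro: scong.trans)
qed

lemma scong_blk: "scong ((i, t) # blk f i) (blk (f(i := bm (gen (i,t) i) (f i))) i)"
proof (cases t)
  case True then show ?thesis
    by (cases "f i") (auto simp: blk_def gen_def bm_def intro: scong.refl)
next
  case False
  obtain a b where fi: "f i = (a, b)" by (cases "f i")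
  show ?thesis
  proof (cases a)
    case 0 then show ?thesis using False fi
      by (simp add: blk_def gen_def bm_def scong.refl)
  next
    case (Suc a')
    have "scong ([] @ [(i,False),(i,True)] @ (replicate a' (i,True) @ replicate b (i,False)))
       ([] @ [] @ (replicate a' (i,True) @ replicate b (i,False)))"
      by (rule scong.ctx, rule scong.yx)
    then show ?thesis using False fi Suc by (auto simp: blk_def gen_def bm_def)
  qed
qed

lemma scong_cons_concat:
  assumes "distinct L" "i \<in> set L"
  shows "scong ((i,t) # concat (map (blk f) L)) (concat (map (blk (f(i := bm (gen (i,t) i) (f i)))) L))"
  using assms
proof (induction L)
  case Nil then show ?case by simp
next
  case (Cons j L)
  let ?f' = "f(i := bm (gen (i,t) i) (f i))"
  show ?case
  proof (cases "j = i")
    case True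
    with Cons have "i \<notin> set L" by auto
    then have eq: "concat (map (blk ?f') L) = concat (map (blk f) L)"
      by (intro arg_cong[where f=concat] map_cong) (auto simp: blk_def)
    have "scong ([] @ ((i,t) # blk f i) @ concat (map (blk f) L)) ([] @ blk ?f' i @ concat (map (blk f) L))"
      by (rule scong.ctx, rule scong_blk)
    then show ?thesis using True eq by (simp only: list.map concat.simps append_Cons append_Nil)
  next
    case False
    with Cons have i: "i \<in> set L" "distinct L" by auto
    have b: "blk ?f' j = blk f j" using False by (simp add: blk_def)
    have "scong ([] @ ((i,t) # blk f j) @ concat (map (blk f) L)) ([] @ (blk f j @ [(i,t)]) @ concat (map (blk f) L))"
      by (rule scong.ctx, rule scong_pass) (use False in \<open>auto simp: blk_def\<close>)
    moreover have "scong (blk f j @ ((i,t) # concat (map (blk f) L)) @ []) (blk f j @ concat (map (blk ?f') L) @ [])"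
      by (rule scong.ctx, rule Cons.IH[OF i(2) i(1)])
    ultimately have "scong ((i,t) # blk f j @ concat (map (blk f) L)) (blk f j @ concat (map (blk ?f') L))"
      by (auto intro: scong.trans)
    then show ?thesis by (simp only: list.map concat.simps b append_Cons append_Nil)
  qed
qed

lemma scong_cw: "scong w (cw (nfw w))"
proof (induction w)
  case Nil
  have "cw (\<lambda>_. (0,0) :: nat \<times> nat) = ([] :: ('a \<times> bool) list)"
    by (simp add: cw_def blk_def)
  then show ?case by (simp add: scong.refl)
next
  case (Cons l w)
  obtain i t where l: "l = (i, t)" by (cases l)
  have 1: "scong ([l] @ w @ []) ([l] @ cw (nfw w) @ [])" by (rule scong.ctx[OF Cons.IH])
  have 2: "scong ((i,t) # cw (nfw w)) (cw ((nfw w)(i := bm (gen (i,t) i) (nfw w i))))"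
    unfolding cw_def by (rule scong_cons_concat) (use idx_list in auto)
  have 3: "(nfw w)(i := bm (gen (i,t) i) (nfw w i)) = nfw (l # w)"
    by (auto simp: fun_eq_iff gen_def l)
  show ?case using 1 2 3 l by (auto intro: scong.trans)
qed

lift_definition Nf :: "'n::finite smon \<Rightarrow> 'n \<Rightarrow> nat \<times> nat" is nfw
  by (rule scong_nfw)

definition Mon :: "('n::finite \<Rightarrow> nat \<times> nat) \<Rightarrow> 'n smon" where
  "Mon f = abs_smon (cw f)"

lemma Nf_Mon [simp]: "Nf (Mon f) = f"
  unfolding Mon_def by (simp add: Nf.abs_eq)

lemma Mon_Nf [simp]: "Mon (Nf m) = m"
  unfolding Mon_def
proof -
  obtain w where m: "m = abs_smon w" by (metis Quotient3_abs_rep[OF Quotient3_smon])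
  have "scong (cw (nfw w)) w" by (rule scong.sym[OF scong_cw])
  then show "abs_smon (cw (Nf m)) = m" by (simp add: m Nf.abs_eq smon.abs_eq_iff)
qed

lemma Nf_inj: "Nf m = Nf m' \<longleftrightarrow> m = m'"
  by (metis Mon_Nf)

lemma Mon_inj: "Mon f = Mon g \<longleftrightarrow> f = g"
  by (metis Nf_Mon)

lemma Nf_plus: "Nf (m + m') = (\<lambda>k. bm (Nf m k) (Nf m' k))"
  by transfer (simp add: nfw_append)

lemma Nf_zero: "Nf 0 = (\<lambda>_. (0,0))"
  by transfer simp

lemma Nf_letter: "Nf (letter l) = gen l"
  by transfer (simp add: fun_eq_iff)

lemma Nf_eqI: "Nf m = Nf m' \<Longrightarrow> m = m'"
  by (simp add: Nf_inj)


lemma pm_sum_single: "p = (\<Sum>\<alpha>\<in>Poly_Mapping.keys p. Poly_Mapping.single \<alpha> (Poly_Mapping.lookup p \<alpha>))"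
  by (rule poly_mapping_eqI)
     (auto simp: lookup_sum lookup_single when_def in_keys_iff sum.delta[OF finite_keys] cong: if_cong)

lemma pm_induct [case_names zero single add]:
  assumes "P 0" "\<And>a c. P (Poly_Mapping.single a c)" "\<And>f g. P f \<Longrightarrow> P g \<Longrightarrow> P (f + g)"
  shows "P (p :: 'a \<Rightarrow>\<^sub>0 'b::comm_monoid_add)"
proof -
  have "finite A \<Longrightarrow> P (\<Sum>\<alpha>\<in>A. Poly_Mapping.single \<alpha> (Poly_Mapping.lookup p \<alpha>))" for A
    by (induction A rule: finite_induct) (auto intro: assms)
  then show ?thesis by (subst pm_sum_single) simp
qed

lemma lookup_mult_single_right:
  "Poly_Mapping.lookup (f * Poly_Mapping.single u c) w
     = Sum_any (\<lambda>m. Poly_Mapping.lookup f m * c when m + u = w)"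
proof -
  have inner: "(\<Sum>q. (c when u = q) when w = l + q) = (c when l + u = w)" for l
  proof -
    have "(\<lambda>q. (c when u = q) when w = l + q) = (\<lambda>q. (c when l + u = w) when q = u)"
      by (auto simp: fun_eq_iff when_def)
    then have "(\<Sum>q. (c when u = q) when w = l + q) = (\<Sum>q. (c when l + u = w) when q = u)"
      by (rule arg_cong)
    also have "\<dots> = (c when l + u = w)" by (rule Sum_any_when_equal)
    finally show ?thesis .
  qed
  show ?thesis
    by (simp add: lookup_mult lookup_single inner mult_when)
qed

lemma lookup_mult_single_left:
  "Poly_Mapping.lookup (Poly_Mapping.single u c * f) w
     = Sum_any (\<lambda>m. c * Poly_Mapping.lookup f m when u + m = w)"
proof -
  have "Poly_Mapping.lookup (Poly_Mapping.single u c * f) w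
    = (\<Sum>l. (c when u = l) * (\<Sum>q. Poly_Mapping.lookup f q when w = l + q))"
    by (simp add: lookup_mult lookup_single)
  also have "\<dots> = (\<Sum>l. (c * (\<Sum>q. Poly_Mapping.lookup f q when w = l + q)) when l = u)"
    by (intro Sum_any.cong) (auto simp: when_def)
  also have "\<dots> = c * (\<Sum>q. Poly_Mapping.lookup f q when w = u + q)"
    by simp
  also have "\<dots> = (\<Sum>q. c * (Poly_Mapping.lookup f q when w = u + q))"
  proof -
    have "finite {q. (Poly_Mapping.lookup f q when w = u + q) \<noteq> 0}"
      by (rule finite_subset[of _ "Poly_Mapping.keys f"]) (auto simp: in_keys_iff)
    then show ?thesis by (simp add: Sum_any_right_distrib)
  qed
  also have "\<dots> = Sum_any (\<lambda>m. c * Poly_Mapping.lookup f m when u + m = w)"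
    by (intro Sum_any.cong) (auto simp: when_def)
  finally show ?thesis .
qed

lemma Sum_any_subset: "finite A \<Longrightarrow> (\<And>x. x \<notin> A \<Longrightarrow> g x = 0) \<Longrightarrow> Sum_any g = sum g A"
  by (rule Sum_any.expand_superset) auto

lemma single_central: "Poly_Mapping.single 0 c * z = z * Poly_Mapping.single 0 (c::'k::comm_ring_1)"
proof (induction z rule: pm_induct)
  case zero then show ?case by simp
next
  case (single a d) then show ?case by (simp add: mult_single mult.commute)
next
  case (add f g) then show ?case by (simp add: distrib_left distrib_right)
qed

lemma sscal_eq: "sscal c a = Poly_Mapping.single 0 c * a"
  unfolding sscal_def by (rule mult_map_scale_conv_mult)

definition pmap :: "('a \<Rightarrow> 'b) \<Rightarrow> ('a \<Rightarrow>\<^sub>0 'k::comm_monoid_add) \<Rightarrow> ('b \<Rightarrow>\<^sub>0 'k)" where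
  "pmap h p = (\<Sum>\<alpha>\<in>Poly_Mapping.keys p. Poly_Mapping.single (h \<alpha>) (Poly_Mapping.lookup p \<alpha>))"

lemma lookup_pmap:
  assumes "inj h"
  shows "Poly_Mapping.lookup (pmap h p) b = (if b \<in> range h then Poly_Mapping.lookup p (inv h b) else 0)"
proof (cases "b \<in> range h")
  case True
  then obtain a where b: "b = h a" by auto
  have "Poly_Mapping.lookup (pmap h p) b = (\<Sum>\<alpha>\<in>Poly_Mapping.keys p. if \<alpha> = a then Poly_Mapping.lookup p \<alpha> else 0)"
    unfolding pmap_def lookup_sum using assms
    by (intro sum.cong) (auto simp: lookup_single when_def b inj_eq)
  also have "\<dots> = Poly_Mapping.lookup p a" by (simp add: sum.delta in_keys_iff)
  finally show ?thesis using assms by (simp add: b)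
next
  case False
  then show ?thesis unfolding pmap_def lookup_sum
    by (auto simp: lookup_single when_def intro!: sum.neutral)
qed

lemma lookup_pmap_h [simp]: "inj h \<Longrightarrow> Poly_Mapping.lookup (pmap h p) (h a) = Poly_Mapping.lookup p a"
  by (simp add: lookup_pmap)

lemma lookup_pmap_nh: "inj h \<Longrightarrow> b \<notin> range h \<Longrightarrow> Poly_Mapping.lookup (pmap h p) b = 0"
  by (simp add: lookup_pmap)

lemma pmap_eqI:
  assumes "inj h" "\<And>a. Poly_Mapping.lookup f (h a) = Poly_Mapping.lookup p a"
    "\<And>b. b \<notin> range h \<Longrightarrow> Poly_Mapping.lookup f b = 0"
  shows "f = pmap h p"
  by (rule poly_mapping_eqI) (metis assms lookup_pmap_h lookup_pmap_nh rangeE)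

lemma pmap_add: "inj h \<Longrightarrow> pmap h (p + q) = pmap h p + pmap h (q :: _ \<Rightarrow>\<^sub>0 'k::comm_monoid_add)"
  by (rule HOL.sym, rule pmap_eqI) (auto simp: lookup_add lookup_pmap_nh)

lemma pmap_zero [simp]: "pmap h 0 = 0"
  by (simp add: pmap_def)

lemma pmap_single: "inj h \<Longrightarrow> pmap h (Poly_Mapping.single a c) = Poly_Mapping.single (h a) c"
  by (rule HOL.sym, rule pmap_eqI) (auto simp: lookup_single when_def inj_eq)

lemma pmap_uminus: "inj h \<Longrightarrow> pmap h (- p) = - pmap h (p :: _ \<Rightarrow>\<^sub>0 'k::ab_group_add)"
  by (rule HOL.sym, rule pmap_eqI) (auto simp: lookup_pmap_nh)

lemma pmap_diff: "inj h \<Longrightarrow> pmap h (p - q) = pmap h p - pmap h (q :: _ \<Rightarrow>\<^sub>0 'k::ab_group_add)"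
  by (rule HOL.sym, rule pmap_eqI) (auto simp: lookup_minus lookup_pmap_nh)

lemma pmap_mult:
  fixes h :: "'a::monoid_add \<Rightarrow> 'b::monoid_add"
  assumes "inj h" "\<And>a b. h (a + b) = h a + h b"
  shows "pmap h (p * q) = pmap h p * pmap h (q :: _ \<Rightarrow>\<^sub>0 'k::ring)"
proof (induction p arbitrary: q rule: pm_induct)
  case zero then show ?case by simp
next
  case (single a c)
  show ?case
  proof (induction q rule: pm_induct)
    case zero then show ?case by simp
  next
    case (single b d) then show ?case using assms by (simp add: mult_single pmap_single)
  next
    case (add f g) then show ?case using assms by (simp add: distrib_left pmap_add)
  qed
next
  case (add f g) then show ?case using assms by (simp add: distrib_right pmap_add)
qed

lemma pmap_one: "inj h \<Longrightarrow> h 0 = 0 \<Longrightarrow> pmap h 1 = (1 :: _ \<Rightarrow>\<^sub>0 'k::{zero_neq_one,comm_monoid_add})"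
  by (metis pmap_single single_one)

lemma pmap_sum: "inj h \<Longrightarrow> pmap h (sum f A) = (\<Sum>a\<in>A. pmap h (f a :: _ \<Rightarrow>\<^sub>0 'k::comm_monoid_add))"
  by (induction A rule: infinite_finite_induct) (auto simp: pmap_add)

lemma xword_Mon: "xword \<alpha> = Mon (\<lambda>k. (Poly_Mapping.lookup \<alpha> k, 0))"
  unfolding xword_def Mon_def cw_def blk_def by simp

lemma Nf_xword: "Nf (xword \<alpha>) = (\<lambda>k. (Poly_Mapping.lookup \<alpha> k, 0))"
  by (simp add: xword_Mon)

lemma xword_add: "xword (\<alpha> + \<beta>) = xword \<alpha> + xword \<beta>"
  by (rule Nf_eqI) (auto simp: Nf_plus Nf_xword lookup_add bm_def fun_eq_iff)

lemma xword_zero: "xword 0 = 0"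
  by (rule Nf_eqI) (simp add: Nf_xword Nf_zero)

lemma inj_xword: "inj xword"
proof (rule injI)
  fix a b :: "'a \<Rightarrow>\<^sub>0 nat" assume "xword a = xword b"
  then have "Nf (xword a) = Nf (xword b)" by simp
  then show "a = b" by (auto simp: Nf_xword fun_eq_iff intro: poly_mapping_eqI)
qed

lemma xword_single: "xword (Poly_Mapping.single i 1) = letter (i, True)"
  by (rule Nf_eqI) (auto simp: Nf_xword Nf_letter gen_def lookup_single when_def fun_eq_iff)

lemma emb_pmap: "emb = pmap xword"
  by (simp add: fun_eq_iff emb_def pmap_def)

lemma emb_add: "emb (p + q) = emb p + emb q"
  by (simp add: emb_pmap pmap_add inj_xword)
lemma emb_diff: "emb (p - q) = emb p - emb q"
  by (simp add: emb_pmap pmap_diff inj_xword)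
lemma emb_uminus: "emb (- p) = - emb p"
  by (simp add: emb_pmap pmap_uminus inj_xword)
lemma emb_zero [simp]: "emb 0 = 0"
  by (simp add: emb_pmap)
lemma emb_mult: "emb (p * q) = emb p * emb (q :: ('n::finite,'k::comm_ring_1) P)"
  by (simp add: emb_pmap pmap_mult inj_xword xword_add)
lemma emb_one [simp]: "emb 1 = (1 :: ('n::finite,'k::comm_ring_1) S)"
  by (simp add: emb_pmap pmap_one inj_xword xword_zero)
lemma emb_single: "emb (Poly_Mapping.single \<alpha> c) = Poly_Mapping.single (xword \<alpha>) c"
  by (simp add: emb_pmap pmap_single inj_xword)

lemma emb_x: "emb (Poly_Mapping.single (Poly_Mapping.single i 1) 1) = (X i :: ('n::finite,'k::comm_ring_1) S)"
  by (simp only: emb_single xword_single X_def)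

lemma emb_comm: "emb p * emb q = emb q * emb (p :: ('n::finite,'k::comm_ring_1) P)"
  by (metis emb_mult mult.commute)

lemma emb_X_comm: "emb p * X i = X i * emb (p :: ('n::finite,'k::comm_ring_1) P)"
  by (metis emb_comm emb_x)

lemma lookup_emb_xword [simp]: "Poly_Mapping.lookup (emb p) (xword \<alpha>) = Poly_Mapping.lookup p \<alpha>"
  by (simp add: emb_pmap inj_xword)

lemma lookup_emb_nx: "m \<notin> range xword \<Longrightarrow> Poly_Mapping.lookup (emb p) m = 0"
  by (simp add: emb_pmap inj_xword lookup_pmap_nh)


section \<open>Generators and relations in S\<close>

lemmas nf_simps = Nf_plus Nf_letter Nf_zero Nf_xword gen_def bm_def fun_eq_iff

lemma YX: "Y i * X i = (1 :: ('n::finite,'k::comm_ring_1) S)"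
proof -
  have "letter (i, False) + letter (i, True) = (0 :: 'n smon)"
    by (rule Nf_eqI) (auto simp: nf_simps)
  then show ?thesis by (simp add: X_def Y_def mult_single)
qed

lemma XY_comm: "i \<noteq> j \<Longrightarrow> X i * Y j = Y j * (X i :: ('n::finite,'k::comm_ring_1) S)"
proof -
  assume ij: "i \<noteq> j"
  have "letter (i, True) + letter (j, False) = (letter (j, False) + letter (i, True) :: 'n smon)"
    by (rule Nf_eqI) (use ij in \<open>auto simp: nf_simps\<close>)
  then show ?thesis by (simp add: X_def Y_def mult_single)
qed

lemma XX_comm: "X i * X j = X j * (X i :: ('n::finite,'k::comm_ring_1) S)"
proof -
  have "letter (i, True) + letter (j, True) = (letter (j, True) + letter (i, True) :: 'n smon)"
    by (rule Nf_eqI) (auto simp: nf_simps)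
  then show ?thesis by (simp add: X_def Y_def mult_single)
qed

lemma YY_comm: "Y i * Y j = Y j * (Y i :: ('n::finite,'k::comm_ring_1) S)"
proof (cases "i = j")
  case False
  have "letter (i, False) + letter (j, False) = (letter (j, False) + letter (i, False) :: 'n smon)"
    by (rule Nf_eqI) (use False in \<open>auto simp: nf_simps\<close>)
  then show ?thesis by (simp add: X_def Y_def mult_single)
qed simp

definition ee :: "'n \<Rightarrow> ('n::finite,'k::comm_ring_1) S" where
  "ee i = 1 - X i * Y i"

lemma ee_X: "ee i * X i = (0 :: ('n::finite,'k::comm_ring_1) S)"
  by (simp add: ee_def algebra_simps mult.assoc YX)

lemma Y_ee: "Y i * ee i = (0 :: ('n::finite,'k::comm_ring_1) S)"
proof -
  have "Y i * (X i * Y i) = (Y i :: ('n::finite,'k::comm_ring_1) S)" by (simp add: YX flip: mult.assoc)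
  then show ?thesis by (simp add: ee_def algebra_simps)
qed

lemma ee_idem: "ee i * ee i = (ee i :: ('n::finite,'k::comm_ring_1) S)"
proof -
  have "X i * Y i * (X i * Y i) = (X i * Y i :: ('n::finite,'k::comm_ring_1) S)" by (metis YX mult.assoc mult_1_left)
  then show ?thesis by (simp add: ee_def algebra_simps)
qed

lemma ee_X_comm: "i \<noteq> j \<Longrightarrow> ee i * X j = X j * (ee i :: ('n::finite,'k::comm_ring_1) S)"
proof -
  assume ij: "i \<noteq> j"
  have ji: "j \<noteq> i" using ij by simp
  have "X i * Y i * X j = X i * (Y i * (X j :: ('n::finite,'k::comm_ring_1) S))" by (simp add: mult.assoc)
  also have "\<dots> = X i * (X j * Y i)" by (simp only: XY_comm[OF ji])
  also have "\<dots> = X j * X i * Y i" by (simp add: XX_comm flip: mult.assoc)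
  finally have "X i * Y i * X j = X j * (X i * (Y i :: ('n,'k) S))" by (simp add: mult.assoc)
  then show ?thesis by (simp add: ee_def algebra_simps)
qed

lemma ee_Y_comm: "i \<noteq> j \<Longrightarrow> ee i * Y j = Y j * (ee i :: ('n::finite,'k::comm_ring_1) S)"
proof -
  assume ij: "i \<noteq> j"
  have "X i * Y i * Y j = X i * (Y j * (Y i :: ('n::finite,'k::comm_ring_1) S))" by (metis mult.assoc YY_comm)
  also have "\<dots> = (X i * Y j) * Y i" by (simp add: mult.assoc)
  also have "\<dots> = Y j * (X i * Y i)" using XY_comm[OF ij] by (metis mult.assoc)
  finally have "X i * Y i * Y j = Y j * (X i * (Y i :: ('n,'k) S))" .
  then show ?thesis by (simp add: ee_def algebra_simps)
qed

lemma ee_comm: "ee i * ee j = ee j * (ee i :: ('n::finite,'k::comm_ring_1) S)"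
proof (cases "i = j")
  case False
  have ji: "j \<noteq> i" using False by simp
  have "X i * Y i * (X j * Y j) = X j * Y j * (X i * (Y i :: ('n::finite,'k::comm_ring_1) S))"
  proof -
    have "X i * Y i * (X j * Y j) = X i * (Y i * X j) * (Y j :: ('n::finite,'k::comm_ring_1) S)" by (simp add: mult.assoc)
    also have "\<dots> = X i * (X j * Y i) * Y j" by (simp only: XY_comm[OF ji])
    also have "\<dots> = X j * (X i * Y i) * Y j" by (simp add: mult.assoc[symmetric] XX_comm)
    also have "\<dots> = X j * X i * (Y i * Y j)" by (simp add: mult.assoc)
    also have "\<dots> = X j * X i * (Y j * Y i)" by (metis YY_comm)
    also have "\<dots> = X j * (X i * Y j) * Y i" by (simp add: mult.assoc)
    also have "\<dots> = X j * (Y j * X i) * Y i" by (simp only: XY_comm[OF False])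
    also have "\<dots> = X j * Y j * (X i * Y i)" by (simp add: mult.assoc)
    finally show ?thesis .
  qed
  then show ?thesis by (simp add: ee_def algebra_simps)
qed simp

lemma lookup_subst0: "Poly_Mapping.lookup (subst0 j f) \<alpha> = (if Poly_Mapping.lookup \<alpha> j = 0 then Poly_Mapping.lookup f \<alpha> else 0)"
  by (simp add: subst0.rep_eq)

lemma lookup_divx: "Poly_Mapping.lookup (divx j f) \<alpha> = Poly_Mapping.lookup f (\<alpha> + Poly_Mapping.single j 1)"
  by (simp add: divx.rep_eq)

lemma subst0_add: "subst0 j (f + g) = subst0 j f + subst0 j g"
  by (rule poly_mapping_eqI) (simp add: lookup_subst0 lookup_add)
lemma subst0_diff: "subst0 j (f - g) = subst0 j f - subst0 j (g :: ('n,'k::comm_ring_1) P)"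
  by (rule poly_mapping_eqI) (simp add: lookup_subst0 lookup_minus)
lemma subst0_zero [simp]: "subst0 j 0 = 0"
  by (rule poly_mapping_eqI) (simp add: lookup_subst0)
lemma divx_add: "divx j (f + g) = divx j f + divx j g"
  by (rule poly_mapping_eqI) (simp add: lookup_divx lookup_add)
lemma divx_diff: "divx j (f - g) = divx j f - divx j (g :: ('n,'k::comm_ring_1) P)"
  by (rule poly_mapping_eqI) (simp add: lookup_divx lookup_minus)
lemma divx_zero [simp]: "divx j 0 = 0"
  by (rule poly_mapping_eqI) (simp add: lookup_divx)

lemma subst0_single0: "Poly_Mapping.lookup \<alpha> j = 0 \<Longrightarrow> subst0 j (Poly_Mapping.single \<alpha> c) = Poly_Mapping.single \<alpha> c"
  by (rule poly_mapping_eqI) (auto simp: lookup_subst0 lookup_single when_def)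

lemma subst0_single1: "Poly_Mapping.lookup \<alpha> j \<noteq> 0 \<Longrightarrow> subst0 j (Poly_Mapping.single \<alpha> c) = 0"
  by (rule poly_mapping_eqI) (auto simp: lookup_subst0 lookup_single when_def)

lemma pm_minus_single_eq:
  assumes "Poly_Mapping.lookup \<alpha> j \<noteq> 0"
  shows "\<alpha> = \<beta> + Poly_Mapping.single j 1 \<longleftrightarrow> \<alpha> - Poly_Mapping.single j 1 = (\<beta> :: 'n \<Rightarrow>\<^sub>0 nat)"
  using assms by (auto simp: poly_mapping_eq_iff fun_eq_iff lookup_add lookup_minus lookup_single when_def)

lemma pm_add_minus_single:
  assumes "Poly_Mapping.lookup \<alpha> j \<noteq> 0"
  shows "Poly_Mapping.single j 1 + (\<alpha> - Poly_Mapping.single j 1) = (\<alpha> :: 'n \<Rightarrow>\<^sub>0 nat)"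
  using assms by (auto simp: poly_mapping_eq_iff fun_eq_iff lookup_add lookup_minus lookup_single when_def)

lemma divx_single1:
  assumes "Poly_Mapping.lookup \<alpha> j \<noteq> 0"
  shows "divx j (Poly_Mapping.single \<alpha> c) = Poly_Mapping.single (\<alpha> - Poly_Mapping.single j 1) c"
  by (rule poly_mapping_eqI) (simp only: lookup_divx lookup_single pm_minus_single_eq[OF assms])

lemma x_divx: "Poly_Mapping.single (Poly_Mapping.single i 1) 1 * divx i (p - subst0 i p) = p - subst0 i (p :: ('n,'k::comm_ring_1) P)"
proof (induction p rule: pm_induct)
  case zero then show ?case by simp
next
  case (single a c)
  show ?case
  proof (cases "Poly_Mapping.lookup a i = 0")
    case True then show ?thesis by (simp add: subst0_single0)
  next
    case False then show ?thesis
      by (simp add: subst0_single1 divx_single1 mult_single pm_add_minus_single[OF False, simplified])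
  qed
next
  case (add f g)
  have "f + g - subst0 i (f + g) = (f - subst0 i f) + (g - subst0 i g)"
    by (simp add: subst0_add algebra_simps)
  then show ?case using add by (simp only: divx_add distrib_left)
qed

section \<open>Commutation of y and e with polynomials\<close>

lemma divx_split: "divx i (f + g - (subst0 i f + subst0 i g)) = divx i (f - subst0 i f) + divx i (g - subst0 i (g :: ('n,'k::comm_ring_1) P))"
proof -
  have "f + g - (subst0 i f + subst0 i g) = (f - subst0 i f) + (g - subst0 i g)"
    by (simp add: algebra_simps)
  then show ?thesis by (simp only: divx_add)
qed


lemma xword_minus_single:
  assumes "Poly_Mapping.lookup \<alpha> i \<noteq> 0"
  shows "xword \<alpha> = letter (i, True) + xword (\<alpha> - Poly_Mapping.single i 1)"
  using assms by (intro Nf_eqI) (auto simp: nf_simps lookup_minus lookup_single when_def)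

lemma Y_emb: "Y i * emb p = emb (divx i (p - subst0 i p)) + emb (subst0 i p) * (Y i :: ('n::finite,'k::comm_ring_1) S)"
proof (induction p rule: pm_induct)
  case zero then show ?case by simp
next
  case (single a c)
  show ?case
  proof (cases "Poly_Mapping.lookup a i = 0")
    case True
    have "letter (i, False) + xword a = xword a + letter (i, False)"
      using True by (intro Nf_eqI) (auto simp: nf_simps)
    then show ?thesis using True by (simp add: subst0_single0 emb_single Y_def mult_single)
  next
    case False
    have "letter (i, False) + xword a = xword (a - Poly_Mapping.single i 1)"
      using False by (intro Nf_eqI) (auto simp: nf_simps lookup_minus lookup_single when_def)
    then show ?thesis using False by (simp add: subst0_single1 divx_single1 emb_single Y_def mult_single)
  qed
next
  case (add f g) then show ?case by (simp add: subst0_add divx_split distrib_left distrib_right emb_add algebra_simps)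
qed

lemma ee_emb: "ee i * emb p = emb (subst0 i p) * (ee i :: ('n::finite,'k::comm_ring_1) S)"
proof (induction p rule: pm_induct)
  case zero then show ?case by simp
next
  case (single a c)
  show ?case
  proof (cases "Poly_Mapping.lookup a i = 0")
    case True
    have "letter (i, True) + letter (i, False) + xword a = xword a + (letter (i, True) + letter (i, False))"
      using True by (intro Nf_eqI) (auto simp: nf_simps)
    then have "X i * Y i * Poly_Mapping.single (xword a) c = Poly_Mapping.single (xword a) c * (X i * (Y i :: ('n,'k) S))"
      by (simp add: X_def Y_def mult_single)
    then show ?thesis using True
      by (simp add: subst0_single0 emb_single ee_def left_diff_distrib right_diff_distrib)
  next
    case False
    have "emb (Poly_Mapping.single a c) = X i * Poly_Mapping.single (xword (a - Poly_Mapping.single i 1)) (c::'k)"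
      unfolding emb_single X_def mult_single by (subst xword_minus_single[OF False]) simp
    then have "ee i * emb (Poly_Mapping.single a c) = ee i * X i * Poly_Mapping.single (xword (a - Poly_Mapping.single i 1)) c"
      by (simp add: mult.assoc)
    then show ?thesis using False by (simp add: ee_X subst0_single1)
  qed
next
  case (add f g) then show ?case by (simp add: subst0_add distrib_left distrib_right emb_add)
qed

lemma X_emb_divx: "X i * emb (divx i (p - subst0 i p)) = emb p - emb (subst0 i (p :: ('n::finite,'k::comm_ring_1) P))"
  by (metis emb_x emb_mult x_divx emb_diff)


lemma alg_endo_add: "alg_endo g \<Longrightarrow> g (a + b) = g a + g b" by (simp add: alg_endo_def)
lemma alg_endo_mult: "alg_endo g \<Longrightarrow> g (a * b) = g a * g b" by (simp add: alg_endo_def)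
lemma alg_endo_one: "alg_endo g \<Longrightarrow> g 1 = 1" by (simp add: alg_endo_def)
lemma alg_endo_sscal: "alg_endo g \<Longrightarrow> g (sscal c a) = sscal c (g a)" by (simp add: alg_endo_def)
lemma alg_endo_zero: "alg_endo g \<Longrightarrow> g 0 = 0"
  by (metis add_cancel_right_right add_0 alg_endo_add)
lemma alg_endo_uminus: "alg_endo g \<Longrightarrow> g (- a) = - g (a :: ('n,'k::comm_ring_1) S)"
  by (metis add.right_inverse alg_endo_add alg_endo_zero minus_unique)
lemma alg_endo_diff: "alg_endo g \<Longrightarrow> g (a - b) = g a - g (b :: ('n,'k::comm_ring_1) S)"
  by (metis alg_endo_add alg_endo_uminus diff_conv_add_uminus)

lemma alg_endo_id: "alg_endo id" by (simp add: alg_endo_def)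

lemma alg_endo_comp: "alg_endo g \<Longrightarrow> alg_endo h \<Longrightarrow> alg_endo (g \<circ> h)"
  by (simp add: alg_endo_def)

lemma alg_endo_prod_list: "alg_endo g \<Longrightarrow> g (prod_list xs) = prod_list (map g xs)"
  by (induction xs) (auto simp: alg_endo_one alg_endo_mult)

lemma single_abs_word: "Poly_Mapping.single (abs_smon w) (1::'k::comm_ring_1) = prod_list (map (\<lambda>l. Poly_Mapping.single (letter l) 1) w)"
proof (induction w)
  case Nil then show ?case by (simp add: zero_smon_def[symmetric])
next
  case (Cons l w)
  have "abs_smon (l # w) = letter l + abs_smon w"
    by (simp add: letter.abs_eq plus_smon.abs_eq)
  moreover have "Poly_Mapping.single (letter l + abs_smon w) 1 = Poly_Mapping.single (letter l) 1 * Poly_Mapping.single (abs_smon w) (1::'k)"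
    by (simp add: mult_single)
  ultimately show ?case using Cons by simp
qed

lemma single_eq_sscal: "Poly_Mapping.single m c = sscal c (Poly_Mapping.single m (1::'k::comm_ring_1))"
  by (simp add: sscal_def)

lemma letter_cases: "Poly_Mapping.single (letter l) (1::'k::comm_ring_1) = (if snd l then X (fst l) else Y (fst l))"
  by (cases l) (simp add: X_def Y_def)

lemma alg_endo_unique:
  assumes g: "alg_endo g" and h: "alg_endo h"
    and XY: "\<And>i. g (X i) = h (X i)" "\<And>i. g (Y i) = h (Y i)"
  shows "g = (h :: ('n::finite,'k::comm_ring_1) S \<Rightarrow> _)"
proof
  fix f :: "('n,'k) S"
  have w: "g (Poly_Mapping.single (abs_smon w) 1) = h (Poly_Mapping.single (abs_smon w) 1)" for w
  proof -
    have "map g (map (\<lambda>l. Poly_Mapping.single (letter l) 1) w) = map h (map (\<lambda>l. Poly_Mapping.single (letter l) 1) w)"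
      by (auto simp: letter_cases XY)
    then show ?thesis by (simp only: single_abs_word alg_endo_prod_list[OF g] alg_endo_prod_list[OF h])
  qed
  have m: "g (Poly_Mapping.single m 1) = h (Poly_Mapping.single m 1)" for m
    using w by (metis Quotient3_abs_rep[OF Quotient3_smon])
  show "g f = h f"
  proof (induction f rule: pm_induct)
    case zero then show ?case by (simp add: alg_endo_zero g h)
  next
    case (single a c) then show ?case
      by (subst (1 2) single_eq_sscal) (simp add: alg_endo_sscal g h m)
  next
    case (add f1 f2) then show ?case by (simp add: alg_endo_add g h)
  qed
qed

lemma alg_endo_fix_emb:
  assumes g: "alg_endo g" and gX: "\<And>i. g (X i) = X i"
  shows "g (emb p) = emb (p :: ('n::finite,'k::comm_ring_1) P)"
proof (induction p rule: pm_induct)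
  case zero then show ?case by (simp add: alg_endo_zero g)
next
  case (single a c)
  have "g (Poly_Mapping.single (xword a) 1) = Poly_Mapping.single (xword a) (1::'k)"
  proof -
    let ?w = "concat (map (\<lambda>i. replicate (Poly_Mapping.lookup a i) (i, True)) idx_list)"
    have "\<forall>l\<in>set ?w. snd l" by auto
    then have "map g (map (\<lambda>l. Poly_Mapping.single (letter l) (1::'k)) ?w) = map (\<lambda>l. Poly_Mapping.single (letter l) 1) ?w"
      by (auto simp: letter_cases gX)
    then show ?thesis unfolding xword_def
      by (simp only: single_abs_word alg_endo_prod_list[OF g])
  qed
  then show ?case
    by (simp add: emb_single single_eq_sscal[of "xword a" c] alg_endo_sscal g)
next
  case (add f1 f2) then show ?case by (simp add: alg_endo_add g emb_add)
qed

section \<open>Constructing homomorphisms\<close>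

definition rel_ok :: "('n \<times> bool \<Rightarrow> ('n, 'k::comm_ring_1) S) \<Rightarrow> bool" where
  "rel_ok a \<longleftrightarrow> (\<forall>i. a (i, False) * a (i, True) = 1) \<and>
     (\<forall>i j. i \<noteq> j \<longrightarrow> a (i, True) * a (j, False) = a (j, False) * a (i, True)
        \<and> a (i, True) * a (j, True) = a (j, True) * a (i, True)
        \<and> a (i, False) * a (j, False) = a (j, False) * a (i, False))"

definition wimg :: "('n \<times> bool \<Rightarrow> ('n, 'k::comm_ring_1) S) \<Rightarrow> ('n \<times> bool) list \<Rightarrow> ('n, 'k) S" where
  "wimg a w = prod_list (map a w)"

lemma wimg_scong: "scong u v \<Longrightarrow> rel_ok a \<Longrightarrow> wimg a u = wimg a v"
  by (induction rule: scong.induct) (auto simp: wimg_def rel_ok_def mult.assoc)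

definition mimg :: "('n \<times> bool \<Rightarrow> ('n, 'k::comm_ring_1) S) \<Rightarrow> 'n smon \<Rightarrow> ('n, 'k) S" where
  "mimg a m = wimg a (rep_smon m)"

lemma mimg_abs: "rel_ok a \<Longrightarrow> mimg a (abs_smon w) = wimg a w"
  unfolding mimg_def
  by (rule wimg_scong) (auto intro: Quotient3_rep_abs[OF Quotient3_smon] scong.refl)

lemma mimg_plus: "rel_ok a \<Longrightarrow> mimg a (m + m') = mimg a m * mimg a m'"
proof -
  assume a: "rel_ok a"
  obtain w w' where "m = abs_smon w" "m' = abs_smon w'" by (metis Quotient3_abs_rep[OF Quotient3_smon])
  then show ?thesis using a by (simp add: plus_smon.abs_eq mimg_abs wimg_def)
qed

lemma mimg_zero: "rel_ok a \<Longrightarrow> mimg a 0 = 1"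
  by (simp add: zero_smon_def mimg_abs wimg_def)

lemma mimg_letter: "rel_ok a \<Longrightarrow> mimg a (letter l) = a l"
  by (simp add: letter.abs_eq mimg_abs wimg_def)

definition hom :: "('n \<times> bool \<Rightarrow> ('n, 'k::comm_ring_1) S) \<Rightarrow> ('n, 'k) S \<Rightarrow> ('n, 'k) S" where
  "hom a f = (\<Sum>m\<in>Poly_Mapping.keys f. Poly_Mapping.single 0 (Poly_Mapping.lookup f m) * mimg a m)"

lemma hom_superset: "finite K \<Longrightarrow> Poly_Mapping.keys f \<subseteq> K \<Longrightarrow>
   hom a f = (\<Sum>m\<in>K. Poly_Mapping.single 0 (Poly_Mapping.lookup f m) * mimg a m)"
  unfolding hom_def by (rule sum.mono_neutral_left) (auto simp: in_keys_iff)

lemma hom_add: "hom a (f + g) = hom a f + hom a g"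
proof -
  let ?K = "Poly_Mapping.keys f \<union> Poly_Mapping.keys g"
  have "Poly_Mapping.keys (f + g) \<subseteq> ?K" by (rule keys_add)
  then have "hom a (f + g) = (\<Sum>m\<in>?K. Poly_Mapping.single 0 (Poly_Mapping.lookup (f + g) m) * mimg a m)"
    by (intro hom_superset) auto
  also have "\<dots> = (\<Sum>m\<in>?K. Poly_Mapping.single 0 (Poly_Mapping.lookup f m) * mimg a m)
      + (\<Sum>m\<in>?K. Poly_Mapping.single 0 (Poly_Mapping.lookup g m) * mimg a m)"
    by (simp add: lookup_add single_add distrib_right sum.distrib)
  also have "\<dots> = hom a f + hom a g"
    by (simp add: hom_superset[symmetric])
  finally show ?thesis .
qed

lemma hom_zero [simp]: "hom a 0 = 0"
  by (simp add: hom_def)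

lemma hom_single: "hom a (Poly_Mapping.single m c) = Poly_Mapping.single 0 c * mimg a m"
proof (cases "c = 0")
  case True then show ?thesis by simp
next
  case False then show ?thesis by (simp add: hom_def)
qed

lemma hom_mult:
  assumes a: "rel_ok a"
  shows "hom a (f * g) = hom a f * hom a g"
proof (induction f arbitrary: g rule: pm_induct)
  case zero then show ?case by simp
next
  case (single m c)
  show ?case
  proof (induction g rule: pm_induct)
    case zero then show ?case by simp
  next
    case (single m' d)
    have "hom a (Poly_Mapping.single m c * Poly_Mapping.single m' d)
      = Poly_Mapping.single 0 c * Poly_Mapping.single 0 d * (mimg a m * mimg a m')"
      by (simp add: mult_single hom_single mimg_plus[OF a])
    also have "\<dots> = Poly_Mapping.single 0 c * (mimg a m * Poly_Mapping.single 0 d) * mimg a m'"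
    proof -
      have "Poly_Mapping.single 0 d * mimg a m = mimg a m * Poly_Mapping.single 0 d" by (rule single_central)
      then show ?thesis by (metis mult.assoc)
    qed
    finally show ?case by (simp add: hom_single mult.assoc)
  next
    case (add g1 g2) then show ?case by (simp add: distrib_left hom_add)
  qed
next
  case (add f1 f2) then show ?case by (simp add: distrib_right hom_add)
qed

lemma hom_one: "rel_ok a \<Longrightarrow> hom a 1 = 1"
  by (metis hom_single mimg_zero mult_1_right single_one)

lemma hom_alg_endo: "rel_ok a \<Longrightarrow> alg_endo (hom a)"
  unfolding alg_endo_def
  by (simp add: hom_add hom_mult hom_one sscal_eq hom_single mimg_zero)

lemma hom_gen: "rel_ok a \<Longrightarrow> hom a (Poly_Mapping.single (letter l) 1) = a l"
  by (simp add: hom_single mimg_letter)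

lemma hom_X: "rel_ok a \<Longrightarrow> hom a (X i) = a (i, True)"
  by (simp add: X_def hom_gen)

lemma hom_Y: "rel_ok a \<Longrightarrow> hom a (Y i) = a (i, False)"
  by (simp add: Y_def hom_gen)


lemma comm_abstract:
  fixes Yi Yj Pi Pj ei ej Xi Xj Dij Dji Zij Zji :: "'a::ring_1"
  assumes YY: "Yi*Yj = Yj*Yi"
  and YPj: "Yi*Pj = Dji + Zji*Yi" and YPi: "Yj*Pi = Dij + Zij*Yj"
  and eY1: "ei*Yj = Yj*ei" and eY2: "ej*Yi = Yi*ej"
  and eP1: "ei*Pj = Zji*ei" and eP2: "ej*Pi = Zij*ej"
  and ee: "ei*ej = ej*ei"
  and XD1: "Xi*Dji = Pj - Zji" and XD2: "Xj*Dij = Pi - Zij"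
  and DX1: "Dji*Xi = Xi*Dji" and DX2: "Dij*Xj = Xj*Dij"
  and XY1: "Xi*Yi = 1 - ei" and XY2: "Xj*Yj = 1 - ej"
  shows "(Yi + Pi*ei)*(Yj + Pj*ej) - (Yj + Pj*ej)*(Yi + Pi*ei) = (Dji - Dij + Pi*Zji - Pj*Zij)*ei*ej"
proof -
  have Z1: "Zji = Pj - Xi*Dji" using XD1 by simp
  have Z2: "Zij = Pi - Xj*Dij" using XD2 by simp
  have h1: "Yi*(Pj*ej) - Pj*ej*Yi = Dji*ei*ej"
  proof -
    have a: "Yi*(Pj*ej) = Dji*ej + Zji*(Yi*ej)"
    proof -
      have "Yi*(Pj*ej) = (Yi*Pj)*ej" by (rule mult.assoc[symmetric])
      also have "\<dots> = (Dji + Zji*Yi)*ej" by (simp only: YPj)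
      finally show ?thesis by (simp add: distrib_right mult.assoc)
    qed
    have b: "Pj*ej*Yi = Pj*(Yi*ej)" by (simp add: mult.assoc eY2)
    have c: "Xi*Dji*(Yi*ej) = Dji*ej - Dji*ei*ej"
    proof -
      have "Xi*Dji*(Yi*ej) = Dji*(Xi*Yi)*ej" by (simp add: DX1[symmetric] mult.assoc)
      also have "\<dots> = Dji*(1-ei)*ej" by (simp only: XY1)
      finally show ?thesis by (simp add: algebra_simps)
    qed
    have "Yi*(Pj*ej) - Pj*ej*Yi = Dji*ej + Zji*(Yi*ej) - Pj*(Yi*ej)" by (simp only: a b)
    also have "\<dots> = Dji*ej - Xi*Dji*(Yi*ej)" by (simp add: Z1 algebra_simps)
    also have "\<dots> = Dji*ei*ej" by (simp only: c) simp
    finally show ?thesis .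
  qed
  have h2: "Pi*ei*Yj - Yj*(Pi*ei) = - (Dij*ei*ej)"
  proof -
    have a: "Yj*(Pi*ei) = Dij*ei + Zij*(Yj*ei)"
    proof -
      have "Yj*(Pi*ei) = (Yj*Pi)*ei" by (rule mult.assoc[symmetric])
      also have "\<dots> = (Dij + Zij*Yj)*ei" by (simp only: YPi)
      finally show ?thesis by (simp add: distrib_right mult.assoc)
    qed
    have b: "Pi*ei*Yj = Pi*(Yj*ei)" by (simp add: mult.assoc eY1)
    have c: "Xj*Dij*(Yj*ei) = Dij*ei - Dij*ei*ej"
    proof -
      have "Xj*Dij*(Yj*ei) = Dij*(Xj*Yj)*ei" by (simp add: DX2[symmetric] mult.assoc)
      also have "\<dots> = Dij*(1-ej)*ei" by (simp only: XY2)
      also have "\<dots> = Dij*ei - Dij*(ej*ei)" by (simp add: algebra_simps)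
      finally show ?thesis by (simp add: ee[symmetric] mult.assoc)
    qed
    have "Pi*ei*Yj - Yj*(Pi*ei) = Pi*(Yj*ei) - (Dij*ei + Zij*(Yj*ei))" by (simp only: a b)
    also have "\<dots> = Xj*Dij*(Yj*ei) - Dij*ei" by (simp add: Z2 algebra_simps)
    also have "\<dots> = - (Dij*ei*ej)" by (simp only: c) simp
    finally show ?thesis .
  qed
  have h3: "Pi*ei*(Pj*ej) - Pj*ej*(Pi*ei) = (Pi*Zji - Pj*Zij)*ei*ej"
  proof -
    have a: "Pi*ei*(Pj*ej) = Pi*Zji*ei*ej"
    proof -
      have "Pi*ei*(Pj*ej) = Pi*(ei*Pj)*ej" by (simp add: mult.assoc)
      then show ?thesis by (simp add: eP1 mult.assoc)
    qed
    have b: "Pj*ej*(Pi*ei) = Pj*Zij*ei*ej"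
    proof -
      have "Pj*ej*(Pi*ei) = Pj*(ej*Pi)*ei" by (simp add: mult.assoc)
      also have "\<dots> = Pj*Zij*(ej*ei)" by (simp add: eP2 mult.assoc)
      finally show ?thesis by (simp add: ee mult.assoc)
    qed
    show ?thesis using a b by (simp add: algebra_simps)
  qed
  have "(Yi + Pi*ei)*(Yj + Pj*ej) - (Yj + Pj*ej)*(Yi + Pi*ei)
     = (Yi*Yj - Yj*Yi) + (Yi*(Pj*ej) - Pj*ej*Yi) + (Pi*ei*Yj - Yj*(Pi*ei)) + (Pi*ei*(Pj*ej) - Pj*ej*(Pi*ei))"
    by (simp add: algebra_simps)
  also have "\<dots> = (Dji - Dij + Pi*Zji - Pj*Zij)*ei*ej"
    by (simp only: h1 h2 h3 YY) (simp add: algebra_simps)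
  finally show ?thesis .
qed

definition cnd :: "('n \<Rightarrow> ('n, 'k::comm_ring_1) P) \<Rightarrow> 'n \<Rightarrow> 'n \<Rightarrow> ('n, 'k) P" where
  "cnd p i j = - divx j (p i - subst0 j (p i)) + divx i (p j - subst0 i (p j))
      + p i * subst0 i (p j) - p j * subst0 j (p i)"

lemma st_cond_cnd: "st_cond p \<longleftrightarrow> (\<forall>i j. i \<noteq> j \<longrightarrow> cnd p i j = 0)"
  by (simp add: st_cond_def cnd_def)

definition AA :: "('n \<Rightarrow> ('n, 'k::comm_ring_1) P) \<Rightarrow> 'n::finite \<Rightarrow> ('n, 'k) S" where
  "AA p i = Y i + emb (p i) * ee i"

lemma AA_comm:
  fixes p :: "'n::finite \<Rightarrow> ('n,'k::comm_ring_1) P"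
  assumes ij: "i \<noteq> j"
  shows "AA p i * AA p j - AA p j * AA p i = emb (cnd p i j) * ee i * ee j"
proof -
  have ji: "j \<noteq> i" using ij by simp
  have XY1: "X i * Y i = 1 - (ee i :: ('n,'k) S)" and XY2: "X j * Y j = 1 - (ee j :: ('n,'k) S)"
    by (simp_all add: ee_def)
  have "AA p i * AA p j - AA p j * AA p i =
    (emb (divx i (p j - subst0 i (p j))) - emb (divx j (p i - subst0 j (p i)))
      + emb (p i) * emb (subst0 i (p j)) - emb (p j) * emb (subst0 j (p i))) * ee i * ee j"
    unfolding AA_def
    by (rule comm_abstract[where Xi = "X i" and Xj = "X j"])
       (simp_all add: YY_comm Y_emb ee_Y_comm[OF ij] ee_Y_comm[OF ji] ee_emb ee_comm X_emb_divx emb_X_comm XY1 XY2)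
  also have "\<dots> = emb (cnd p i j) * ee i * ee j"
    by (simp add: cnd_def emb_add emb_diff emb_uminus emb_mult)
  finally show ?thesis .
qed

definition sig_img :: "('n \<Rightarrow> ('n, 'k::comm_ring_1) P) \<Rightarrow> 'n::finite \<times> bool \<Rightarrow> ('n, 'k) S" where
  "sig_img p l = (if snd l then X (fst l) else AA p (fst l))"

lemma X_AA_comm:
  assumes "i \<noteq> j" shows "X i * AA p j = AA p j * X i"
proof -
  have "X i * (emb (p j) * ee j) = emb (p j) * ee j * X i"
  proof -
    have "X i * (emb (p j) * ee j) = emb (p j) * (X i * ee j)" by (simp add: emb_X_comm mult.assoc[symmetric])
    also have "\<dots> = emb (p j) * (ee j * X i)" using ee_X_comm[of j i] assms by metis
    finally show ?thesis by (simp add: mult.assoc)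
  qed
  then show ?thesis using XY_comm[OF assms] by (simp add: AA_def algebra_simps)
qed

lemma AA_X: "AA p i * X i = 1"
  by (simp add: AA_def distrib_right YX mult.assoc ee_X)

lemma sig_rel_ok:
  fixes p :: "'n::finite \<Rightarrow> ('n,'k::comm_ring_1) P"
  shows "st_cond p \<Longrightarrow> rel_ok (sig_img p)"
  unfolding rel_ok_def sig_img_def
proof (intro conjI allI impI; simp)
  show "AA p i * X i = 1" for i by (rule AA_X)
  fix i j :: 'n assume c: "st_cond p" and ij: "i \<noteq> j"
  show "X i * AA p j = AA p j * X i" by (rule X_AA_comm[OF ij])
  show "X i * X j = X j * (X i :: ('n,'k) S)" by (rule XX_comm)
  have "AA p i * AA p j - AA p j * AA p i = 0"
    using c ij by (simp add: AA_comm st_cond_cnd)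
  then show "AA p i * AA p j = AA p j * AA p i" by simp
qed

definition sigma :: "('n::finite \<Rightarrow> ('n, 'k::comm_ring_1) P) \<Rightarrow> ('n, 'k) S \<Rightarrow> ('n, 'k) S" where
  "sigma p = hom (sig_img p)"

lemma sigma_alg_endo: "st_cond p \<Longrightarrow> alg_endo (sigma p)"
  by (simp add: sigma_def hom_alg_endo sig_rel_ok)

lemma sigma_is_sigma: "st_cond p \<Longrightarrow> is_sigma p (sigma p)"
  by (simp add: is_sigma_def sigma_def hom_X hom_Y sig_rel_ok sig_img_def AA_def ee_def)

lemma is_sigma_AA: "is_sigma p g \<longleftrightarrow> (\<forall>i. g (X i) = X i \<and> g (Y i) = AA p i)"
  by (simp add: is_sigma_def AA_def ee_def)

lemma is_sigma_unique:
  assumes "alg_endo g" "is_sigma p g" "alg_endo h" "is_sigma p h"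
  shows "g = h"
  using assms by (intro alg_endo_unique) (auto simp: is_sigma_def)

lemma sigma_exists_unique:
  assumes "st_cond p" shows "\<exists>!g. alg_endo g \<and> is_sigma p g"
  using assms sigma_alg_endo sigma_is_sigma is_sigma_unique by blast


lemma Sum_any_one: "(\<And>m. m \<noteq> m0 \<Longrightarrow> g m = 0) \<Longrightarrow> Sum_any g = g m0"
  by (subst Sum_any_subset[of "{m0}"]) auto

lemma Sum_any_two: "m1 \<noteq> m2 \<Longrightarrow> (\<And>m. m \<noteq> m1 \<Longrightarrow> m \<noteq> m2 \<Longrightarrow> g m = 0) \<Longrightarrow> Sum_any g = g m1 + g m2"
  by (subst Sum_any_subset[of "{m1, m2}"]) auto

lemma Sum_any_none: "(\<And>m. g m = 0) \<Longrightarrow> Sum_any g = 0"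
  by (simp add: Sum_any.neutral)

lemma Mon_eq: "(m = Mon v) \<longleftrightarrow> (Nf m = v)"
  by (metis Mon_Nf Nf_Mon)

lemma Nf_left_letter: "Nf (letter l + m) = (Nf m)(fst l := bm (gen l (fst l)) (Nf m (fst l)))"
  by (auto simp: Nf_plus Nf_letter fun_eq_iff gen_def)

lemma Nf_right_letter: "Nf (m + letter l) = (Nf m)(fst l := bm (Nf m (fst l)) (gen l (fst l)))"
  by (auto simp: Nf_plus Nf_letter fun_eq_iff gen_def)

lemma upd_eq_iff: "f(j := t) = v \<longleftrightarrow> t = v j \<and> (\<forall>k. k \<noteq> j \<longrightarrow> f k = v k)"
  by (auto simp: fun_eq_iff)

lemma eq_upd_iff: "f = v(j := t) \<longleftrightarrow> f j = t \<and> (\<forall>k. k \<noteq> j \<longrightarrow> f k = v k)"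
  by (auto simp: fun_eq_iff)

lemma bm_x_left: "bm (Suc 0,0) x = y \<longleftrightarrow> (0 < fst y \<and> x = (fst y - 1, snd y))"
  by (cases x; cases y) (auto simp: bm_def)

lemma bm_x_right: "bm x (Suc 0,0) = y \<longleftrightarrow> (x = (fst y, snd y + 1) \<or> (snd y = 0 \<and> 0 < fst y \<and> x = (fst y - 1, 0)))"
  by (cases x; cases y) (auto simp: bm_def)

lemma bm_y_right: "bm x (0,Suc 0) = y \<longleftrightarrow> (0 < snd y \<and> x = (fst y, snd y - 1))"
  by (cases x; cases y) (auto simp: bm_def)

lemma gen_x: "gen (j, True) j = (1,0)" and gen_y: "gen (j, False) j = (0,1)"
  by (simp_all add: gen_def)

lemma xl_left_char: "(letter (j, True) + m = Mon v) \<longleftrightarrow>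
   (0 < fst (v j) \<and> m = Mon (v(j := (fst (v j) - 1, snd (v j)))))"
  by (simp add: Mon_eq Nf_left_letter upd_eq_iff gen_x bm_x_left eq_upd_iff)

lemma xl_right_char: "(m + letter (j, True) = Mon v) \<longleftrightarrow>
   (m = Mon (v(j := (fst (v j), snd (v j) + 1))) \<or>
    (snd (v j) = 0 \<and> 0 < fst (v j) \<and> m = Mon (v(j := (fst (v j) - 1, 0)))))"
  by (simp add: Mon_eq Nf_right_letter upd_eq_iff gen_x bm_x_right eq_upd_iff) blast

lemma yl_right_char: "(m + letter (j, False) = Mon v) \<longleftrightarrow>
   (0 < snd (v j) \<and> m = Mon (v(j := (fst (v j), snd (v j) - 1))))"
  by (simp add: Mon_eq Nf_right_letter upd_eq_iff gen_y bm_y_right eq_upd_iff)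

lemma Sum_any_when_conj: "(\<Sum>m. g m when P \<and> m = m0) = (if P then g m0 else 0)"
  by (cases P) (simp_all add: when_def)

lemma lookup_X_left: "Poly_Mapping.lookup (X j * f) (Mon v) =
  (if 0 < fst (v j) then Poly_Mapping.lookup f (Mon (v(j := (fst (v j) - 1, snd (v j))))) else 0)"
  unfolding X_def lookup_mult_single_left xl_left_char by (simp add: Sum_any_when_conj)

lemma lookup_Y_right: "Poly_Mapping.lookup (f * Y j) (Mon v) =
  (if 0 < snd (v j) then Poly_Mapping.lookup f (Mon (v(j := (fst (v j), snd (v j) - 1)))) else 0)"
  unfolding Y_def lookup_mult_single_right yl_right_char by (simp add: Sum_any_when_conj)

lemma lookup_X_right: "Poly_Mapping.lookup (f * X j) (Mon v) =
  Poly_Mapping.lookup f (Mon (v(j := (fst (v j), snd (v j) + 1))))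
  + (if snd (v j) = 0 \<and> 0 < fst (v j) then Poly_Mapping.lookup f (Mon (v(j := (fst (v j) - 1, 0)))) else 0)"
proof -
  let ?m1 = "Mon (v(j := (fst (v j), snd (v j) + 1)))"
  let ?m2 = "Mon (v(j := (fst (v j) - 1, 0)))"
  have "Poly_Mapping.lookup (f * X j) (Mon v) =
     (\<Sum>m. Poly_Mapping.lookup f m when m = ?m1 \<or> (snd (v j) = 0 \<and> 0 < fst (v j) \<and> m = ?m2))"
    unfolding X_def lookup_mult_single_right xl_right_char by simp
  also have "\<dots> = Poly_Mapping.lookup f ?m1 + (if snd (v j) = 0 \<and> 0 < fst (v j) then Poly_Mapping.lookup f ?m2 else 0)"
  proof (cases "snd (v j) = 0 \<and> 0 < fst (v j)")
    case True
    have ne: "?m1 \<noteq> ?m2" using True by (simp add: Mon_inj fun_eq_iff)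
    show ?thesis using True by (subst Sum_any_two[OF ne]) (auto simp: when_def)
  next
    case False
    then show ?thesis by (subst Sum_any_one[of ?m1]) (auto simp: when_def)
  qed
  finally show ?thesis .
qed

lemma lookup_one_Mon: "Poly_Mapping.lookup (1 :: ('n::finite,'k::comm_ring_1) S) (Mon v) = (if v = (\<lambda>_. (0,0)) then 1 else 0)"
proof -
  have "(Mon v = 0) = (v = (\<lambda>_. (0,0)))" using Mon_eq[of 0 v] by (auto simp: Nf_zero)
  then show ?thesis by (simp add: lookup_one when_def)
qed

lemma lookup_Y_Mon: "Poly_Mapping.lookup (Y i :: ('n::finite,'k::comm_ring_1) S) (Mon v) = (if v = gen (i, False) then 1 else 0)"
proof -
  have "(letter (i, False) = Mon v) = (v = gen (i, False))" using Mon_eq[of "letter (i, False)" v] by (auto simp: Nf_letter)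
  then show ?thesis by (simp add: Y_def lookup_single when_def)
qed

definition pmo :: "('n::finite \<Rightarrow> nat \<times> nat) \<Rightarrow> 'n \<Rightarrow>\<^sub>0 nat" where
  "pmo v = Abs_poly_mapping (\<lambda>k. fst (v k))"

lemma lookup_pmo: "Poly_Mapping.lookup (pmo v) k = fst (v k)"
  by (simp add: pmo_def)

lemma lookup_emb_Mon: "Poly_Mapping.lookup (emb q) (Mon v) =
   (if \<forall>k. snd (v k) = 0 then Poly_Mapping.lookup q (pmo v) else 0)"
proof (cases "\<forall>k. snd (v k) = 0")
  case True
  then have "Mon v = xword (pmo v)" by (simp add: xword_Mon lookup_pmo Mon_inj fun_eq_iff prod_eq_iff)
  then show ?thesis using True by simp
next
  case False
  have "Mon v \<notin> range xword"
  proof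
    assume "Mon v \<in> range xword"
    then obtain \<alpha> where "Mon v = xword \<alpha>" by auto
    then have "Nf (Mon v) = Nf (xword \<alpha>)" by (rule arg_cong)
    then have "v = Nf (xword \<alpha>)" by simp
    then show False using False by (simp add: Nf_xword)
  qed
  then have "Poly_Mapping.lookup (emb q) (Mon v) = 0" by (rule lookup_emb_nx)
  then show ?thesis by (subst if_not_P[OF False]) simp
qed

lemma gen_y_eq_iff: "(v = gen (i, False)) = (v i = (0, 1) \<and> (\<forall>k. k \<noteq> i \<longrightarrow> v k = (0,0)))"
  by (auto simp: gen_def fun_eq_iff)

lemma classify_y:
  fixes a :: "('n::finite, 'k::comm_ring_1) S"
  assumes R2: "a * X i = 1" and R1: "\<And>j. j \<noteq> i \<Longrightarrow> X j * a = a * X j"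
  shows "\<exists>q. a = Y i + emb q * ee i"
proof -
  define F where "F v = Poly_Mapping.lookup a (Mon v)" for v
  have R1': "(if 0 < fst (v j) then F (v(j := (fst (v j) - 1, snd (v j)))) else 0)
     = F (v(j := (fst (v j), snd (v j) + 1)))
       + (if snd (v j) = 0 \<and> 0 < fst (v j) then F (v(j := (fst (v j) - 1, 0))) else 0)"
    if "j \<noteq> i" for j v
    using arg_cong[OF R1[OF that], of "\<lambda>f. Poly_Mapping.lookup f (Mon v)"]
    by (simp only: lookup_X_left lookup_X_right F_def)
  have R2': "F (v(i := (fst (v i), snd (v i) + 1)))
       + (if snd (v i) = 0 \<and> 0 < fst (v i) then F (v(i := (fst (v i) - 1, 0))) else 0)
     = (if v = (\<lambda>_. (0,0)) then 1 else 0)" for v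
    using arg_cong[OF R2, of "\<lambda>f. Poly_Mapping.lookup f (Mon v)"]
    by (simp only: lookup_X_right lookup_one_Mon F_def)
  have Z1: "F (v(j := (c, Suc d))) = 0" if ji: "j \<noteq> i" for j v c d
  proof (induction d arbitrary: c)
    case 0
    have "F (v(j := (c, Suc 0))) = 0" using R1'[OF ji, of "v(j := (c, 0))"] by (simp cong: if_cong)
    then show ?case by (simp only: fun_upd_def)
  next
    case (Suc d)
    have "F (v(j := (c - 1, Suc d))) = 0" using Suc by (simp only: fun_upd_def)
    then have "F (v(j := (c, Suc (Suc d)))) = 0" using R1'[OF ji, of "v(j := (c, Suc d))"] by (simp cong: if_cong)
    then show ?case by (simp only: fun_upd_def)
  qed
  have Z1': "F v = 0" if "j \<noteq> i" "0 < snd (v j)" for j v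
  proof -
    have "v = v(j := (fst (v j), Suc (snd (v j) - 1)))" using that by simp
    then show ?thesis using Z1[OF that(1)] by metis
  qed
  have Z2: "F v = 0" if "2 \<le> snd (v i)" for v
  proof -
    let ?w = "v(i := (fst (v i), snd (v i) - 1))"
    have "?w \<noteq> (\<lambda>_. (0,0))" using that by (auto simp: fun_eq_iff dest: spec[of _ i])
    moreover have "?w(i := (fst (?w i), snd (?w i) + 1)) = v" using that by (auto simp: fun_eq_iff)
    ultimately show ?thesis using R2'[of ?w] that by (simp cong: if_cong)
  qed
  have Z3: "F v = (if v(i := (fst (v i), 0)) = (\<lambda>_. (0,0)) then 1 else 0)
      - (if 0 < fst (v i) then F (v(i := (fst (v i) - 1, 0))) else 0)" if "snd (v i) = 1" for v
  proof -
    let ?w = "v(i := (fst (v i), 0))"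
    have "?w(i := (fst (?w i), snd (?w i) + 1)) = v" using that by (auto simp: fun_eq_iff prod_eq_iff)
    then show ?thesis using R2'[of ?w] by (simp add: algebra_simps cong: if_cong)
  qed
  define q where "q = Abs_poly_mapping (\<lambda>\<alpha>. Poly_Mapping.lookup a (xword \<alpha>))"
  have fin: "finite {\<alpha>. Poly_Mapping.lookup a (xword \<alpha>) \<noteq> 0}"
  proof -
    have "{\<alpha>. Poly_Mapping.lookup a (xword \<alpha>) \<noteq> 0} = xword -` Poly_Mapping.keys a"
      by (auto simp: in_keys_iff)
    then show ?thesis using finite_vimageI[OF finite_keys inj_xword] by simp
  qed
  have lq: "Poly_Mapping.lookup q (pmo v) = F v" if "\<forall>k. snd (v k) = 0" for v
  proof -
    have "xword (pmo v) = Mon v" using that by (simp add: xword_Mon lookup_pmo Mon_inj fun_eq_iff prod_eq_iff)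
    then show ?thesis using fin by (simp add: q_def F_def)
  qed
  have E: "Poly_Mapping.lookup (emb q) (Mon v) = (if \<forall>k. snd (v k) = 0 then F v else 0)" for v
    by (simp add: lookup_emb_Mon lq)
  have main: "F v = Poly_Mapping.lookup (Y i + emb q * ee i) (Mon v)" for v
  proof -
    have rhs: "Poly_Mapping.lookup (Y i + emb q * ee i) (Mon v) =
      (if v = gen (i, False) then 1 else 0) + Poly_Mapping.lookup (emb q) (Mon v)
       - (if 0 < snd (v i) then Poly_Mapping.lookup (emb q) (Mon v)
            + (if snd (v i) = 1 \<and> 0 < fst (v i) then Poly_Mapping.lookup (emb q) (Mon (v(i := (fst (v i) - 1, 0)))) else 0)
          else 0)"
    proof -
      have "emb q * ee i = emb q - emb q * X i * Y i" by (simp add: ee_def algebra_simps mult.assoc)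
      moreover have "(v(i := (fst (v i), snd (v i) - 1)))(i := (fst (v i), snd (v i) - 1 + 1)) = v" if "0 < snd (v i)"
        using that by (auto simp: fun_eq_iff)
      ultimately show ?thesis
        by (simp add: lookup_add lookup_minus lookup_Y_Mon lookup_Y_right lookup_X_right)
    qed
    show ?thesis
    proof (cases "\<exists>j. j \<noteq> i \<and> 0 < snd (v j)")
      case True
      then obtain j where j: "j \<noteq> i" "0 < snd (v j)" by blast
      have g: "v \<noteq> gen (i, False)" using j by (auto simp: gen_y_eq_iff)
      have n1: "\<not> (\<forall>k. snd ((v(i := (fst (v i) - 1, 0))) k) = 0)" using j by (auto dest: spec[of _ j])
      have n2: "\<not> (\<forall>k. snd (v k) = 0)" using j by auto
      have e1: "Poly_Mapping.lookup (emb q) (Mon (v(i := (fst (v i) - 1, 0)))) = 0"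
        using n1 by (simp only: E if_not_P if_False)
      have e2: "Poly_Mapping.lookup (emb q) (Mon v) = 0" using n2 by (simp only: E if_not_P if_False)
      show ?thesis using Z1'[of j v, OF j] g by (simp add: rhs e1[simplified] e2)
    next
      case False
      then have others: "\<And>j. j \<noteq> i \<Longrightarrow> snd (v j) = 0" by auto
      consider "snd (v i) = 0" | "snd (v i) = 1" | "2 \<le> snd (v i)" by linarith
      then show ?thesis
      proof cases
        case 1
        have "\<forall>k. snd (v k) = 0"
        proof
          fix k show "snd (v k) = 0" using 1 others by (cases "k = i") auto
        qed
        moreover have "v \<noteq> gen (i, False)" using 1 by (auto simp: gen_y_eq_iff)
        ultimately show ?thesis using 1 by (simp add: rhs E)
      next
        case 2
        have np: "\<not> (\<forall>k. snd (v k) = 0)"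
        proof
          assume "\<forall>k. snd (v k) = 0" then have "snd (v i) = 0" by blast
          with 2 show False by simp
        qed
        have p: "\<forall>k. snd ((v(i := (fst (v i) - 1, 0))) k) = 0" using others by simp
        have g: "(v = gen (i, False)) = (v(i := (fst (v i), 0)) = (\<lambda>_. (0,0)))"
          using 2 by (simp add: gen_y_eq_iff upd_eq_iff prod_eq_iff)
        show ?thesis using Z3[of v, OF 2] 2 np p g by (simp add: rhs E)
      next
        case 3
        have np: "\<not> (\<forall>k. snd (v k) = 0)"
        proof
          assume "\<forall>k. snd (v k) = 0" then have "snd (v i) = 0" by blast
          with 3 show False by simp
        qed
        have "v \<noteq> gen (i, False)" using 3 by (auto simp: gen_y_eq_iff)
        then show ?thesis using Z2[of v, OF 3] 3 np by (simp add: rhs E)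
      qed
    qed
  qed
  have "a = Y i + emb q * ee i"
  proof (rule poly_mapping_eqI)
    fix m
    have "Poly_Mapping.lookup a (Mon (Nf m)) = Poly_Mapping.lookup (Y i + emb q * ee i) (Mon (Nf m))"
      using main[of "Nf m"] by (simp only: F_def)
    then show "Poly_Mapping.lookup a m = Poly_Mapping.lookup (Y i + emb q * ee i) m" by simp
  qed
  then show ?thesis by (rule exI)
qed


lemma lookup_Y_right_xword: "Poly_Mapping.lookup (f * Y k) (xword \<alpha>) = 0"
  by (simp add: xword_Mon lookup_Y_right)

lemma lookup_mult_emb_xword: "Poly_Mapping.lookup (emb r) (xword \<alpha>) = Poly_Mapping.lookup r \<alpha>"
  by simp

lemma emb_ee_zero1:
  assumes "emb r * ee i = (0 :: ('n::finite,'k::comm_ring_1) S)" shows "r = 0"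
proof (rule poly_mapping_eqI)
  fix \<alpha>
  have "emb r * ee i = emb r - (emb r * X i) * Y i" by (simp add: ee_def algebra_simps mult.assoc)
  then have "Poly_Mapping.lookup (emb r * ee i) (xword \<alpha>) = Poly_Mapping.lookup r \<alpha>"
    by (simp add: lookup_minus lookup_Y_right_xword)
  then show "Poly_Mapping.lookup r \<alpha> = Poly_Mapping.lookup 0 \<alpha>" using assms by simp
qed

lemma emb_ee_zero2:
  assumes "emb c * ee i * ee j = (0 :: ('n::finite,'k::comm_ring_1) S)" shows "c = 0"
proof (rule poly_mapping_eqI)
  fix \<alpha>
  have "emb c * ee i * ee j = emb c - (emb c * X i) * Y i - (emb c * X j) * Y j + (emb c * X i * Y i * X j) * Y j"
    by (simp add: ee_def algebra_simps mult.assoc)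
  then have "Poly_Mapping.lookup (emb c * ee i * ee j) (xword \<alpha>) = Poly_Mapping.lookup c \<alpha>"
    by (simp add: lookup_minus lookup_add lookup_Y_right_xword)
  then show "Poly_Mapping.lookup c \<alpha> = Poly_Mapping.lookup 0 \<alpha>" using assms by simp
qed

lemma st_classify:
  fixes g :: "('n::finite,'k::comm_ring_1) S \<Rightarrow> ('n,'k) S"
  assumes g: "g \<in> st" shows "\<exists>p. st_cond p \<and> is_sigma p g"
proof -
  have ae: "alg_endo g" and gX: "\<And>i. g (X i) = X i" using g by (auto simp: st_def)
  have "\<exists>q. g (Y i) = Y i + emb q * ee i" for i
  proof (rule classify_y)
    have "g (Y i) * g (X i) = 1" by (simp add: alg_endo_mult[OF ae, symmetric] YX alg_endo_one[OF ae])
    then show "g (Y i) * X i = 1" by (simp add: gX)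
    fix j assume ji: "j \<noteq> i"
    have "g (X j) * g (Y i) = g (Y i) * g (X j)"
      by (simp add: alg_endo_mult[OF ae, symmetric] XY_comm[OF ji])
    then show "X j * g (Y i) = g (Y i) * X j" by (simp add: gX)
  qed
  then have "\<forall>i. \<exists>q. g (Y i) = Y i + emb q * ee i" by blast
  then obtain p where p: "\<forall>i. g (Y i) = Y i + emb (p i) * ee i" by (rule choice[THEN exE])
  have AAg: "g (Y i) = AA p i" for i using p by (simp add: AA_def)
  have sig: "is_sigma p g" by (simp add: is_sigma_AA AAg gX)
  have "cnd p i j = 0" if ij: "i \<noteq> j" for i j
  proof -
    have "AA p i * AA p j = AA p j * AA p i"
      by (simp add: AAg[symmetric] alg_endo_mult[OF ae, symmetric] YY_comm)
    then have "emb (cnd p i j) * ee i * ee j = 0" by (simp add: AA_comm[OF ij, symmetric])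
    then show ?thesis by (rule emb_ee_zero2)
  qed
  then have "st_cond p" by (simp add: st_cond_cnd)
  with sig show ?thesis by blast
qed

lemma st_char: "(st :: (('n::finite,'k::comm_ring_1) S \<Rightarrow> _) set) = {g. alg_endo g \<and> (\<exists>p. st_cond p \<and> is_sigma p g)}"
proof
  show "st \<subseteq> {g. alg_endo g \<and> (\<exists>p. st_cond p \<and> is_sigma p g)}"
    using st_classify by (auto simp: st_def)
  show "{g. alg_endo g \<and> (\<exists>p. st_cond p \<and> is_sigma p g)} \<subseteq> st"
    by (auto simp: st_def is_sigma_def)
qed

lemma st_sigma:
  fixes g :: "('n::finite,'k::comm_ring_1) S \<Rightarrow> ('n,'k) S"
  assumes "g \<in> st" obtains p where "st_cond p" "is_sigma p g" "alg_endo g"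
  using assms st_char by blast

lemma comp_Y:
  fixes g h :: "('n::finite,'k::comm_ring_1) S \<Rightarrow> ('n,'k) S"
  assumes ag: "alg_endo g" and sg: "is_sigma p g" and sh: "is_sigma q h"
  shows "g (h (Y i)) = Y i + (emb (p i) + emb (q i) - emb (q i) * X i * emb (p i)) * ee i"
proof -
  have gX: "g (X i) = X i" and gY: "g (Y i) = AA p i" using sg by (auto simp: is_sigma_AA)
  have hY: "h (Y i) = AA q i" using sh by (auto simp: is_sigma_AA)
  have gP: "g (emb (q i)) = emb (q i)" by (rule alg_endo_fix_emb[OF ag]) (use sg in \<open>auto simp: is_sigma_def\<close>)
  have gE: "g (ee i) = ee i - X i * emb (p i) * ee i"
    by (simp add: ee_def alg_endo_diff[OF ag] alg_endo_mult[OF ag] alg_endo_one[OF ag] gX gY AA_def algebra_simps)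
  have "g (h (Y i)) = AA p i + emb (q i) * (ee i - X i * emb (p i) * ee i)"
    by (simp add: hY AA_def alg_endo_add[OF ag] alg_endo_mult[OF ag] gY gP gE)
  also have "\<dots> = Y i + (emb (p i) + emb (q i) - emb (q i) * X i * emb (p i)) * ee i"
    by (simp add: AA_def algebra_simps)
  finally show ?thesis .
qed

lemma st_comm:
  fixes g h :: "('n::finite,'k::comm_ring_1) S \<Rightarrow> ('n,'k) S"
  assumes g: "g \<in> st" and h: "h \<in> st"
  shows "g \<circ> h = h \<circ> g"
proof -
  obtain p where sg: "is_sigma p g" and ag: "alg_endo g" using st_sigma[OF g] by blast
  obtain q where sh: "is_sigma q h" and ah: "alg_endo h" using st_sigma[OF h] by blast
  have c: "emb (q i) * X i * emb (p i) = emb (p i) * X i * emb (q i)" for i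
    by (metis emb_X_comm emb_comm mult.assoc)
  show ?thesis
  proof (rule alg_endo_unique)
    show "alg_endo (g \<circ> h)" "alg_endo (h \<circ> g)" using ag ah by (simp_all add: alg_endo_comp)
    show "(g \<circ> h) (X i) = (h \<circ> g) (X i)" for i using sg sh by (simp add: is_sigma_def)
    show "(g \<circ> h) (Y i) = (h \<circ> g) (Y i)" for i
      by (simp add: comp_Y[OF ag sg sh] comp_Y[OF ah sh sg] c add.commute)
  qed
qed

lemma st_comp: "g \<in> st \<Longrightarrow> h \<in> st \<Longrightarrow> g \<circ> h \<in> st"
  by (auto simp: st_def alg_endo_comp)


definition EE :: "('n::finite, 'k::comm_ring_1) S" where
  "EE = prod_list (map ee idx_list)"

lemma ee_prod_comm: "ee i * prod_list (map ee L) = prod_list (map ee L) * (ee i :: ('n::finite,'k::comm_ring_1) S)"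
proof (induction L)
  case Nil then show ?case by simp
next
  case (Cons j L)
  have "ee i * (ee j * prod_list (map ee L)) = ee j * (ee i * prod_list (map ee L) :: ('n,'k) S)"
    by (simp only: mult.assoc[symmetric] ee_comm[of i j])
  also have "\<dots> = ee j * prod_list (map ee L) * ee i" by (subst Cons.IH) (simp add: mult.assoc)
  finally show ?case by simp
qed

lemma prod_ee_absorb:
  fixes L :: "'n::finite list"
  shows "i \<in> set L \<Longrightarrow> prod_list (map ee L) * ee i = prod_list (map ee L :: ('n,'k::comm_ring_1) S list)"
proof (induction L)
  case Nil then show ?case by simp
next
  case (Cons j L)
  show ?case
  proof (cases "j = i")
    case True
    have "ee i * prod_list (map ee L) * ee i = ee i * (ee i * prod_list (map ee L) :: ('n,'k) S)"
      by (subst mult.assoc, subst ee_prod_comm[symmetric]) simp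
    also have "\<dots> = ee i * prod_list (map ee L)" by (simp add: ee_idem flip: mult.assoc)
    finally show ?thesis using True by simp
  next
    case False
    then have "i \<in> set L" using Cons by simp
    then show ?thesis using Cons by (simp add: mult.assoc)
  qed
qed

lemma EE_ee: "EE * ee i = (EE :: ('n::finite,'k::comm_ring_1) S)"
  unfolding EE_def by (rule prod_ee_absorb) (use idx_list in auto)

lemma ee_EE: "ee i * EE = (EE :: ('n::finite,'k::comm_ring_1) S)"
  using EE_ee by (simp add: EE_def ee_prod_comm)

lemma EE_X: "EE * X i = (0 :: ('n::finite,'k::comm_ring_1) S)"
proof -
  have "EE * X i = EE * ee i * (X i :: ('n,'k) S)" by (simp only: EE_ee)
  also have "\<dots> = 0" by (simp add: mult.assoc ee_X)
  finally show ?thesis .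
qed

lemma Y_EE: "Y i * EE = (0 :: ('n::finite,'k::comm_ring_1) S)"
proof -
  have "Y i * EE = Y i * (ee i * (EE :: ('n,'k) S))" by (simp only: ee_EE)
  also have "\<dots> = 0" by (simp add: Y_ee flip: mult.assoc)
  finally show ?thesis .
qed

lemma EE_idem: "EE * EE = (EE :: ('n::finite,'k::comm_ring_1) S)"
proof -
  have "EE * prod_list (map ee L) = (EE :: ('n,'k) S)" for L
    by (induction L) (simp_all add: EE_ee flip: mult.assoc)
  then show ?thesis by (simp add: EE_def)
qed

lemma zero_Mon: "(0 :: 'n::finite smon) = Mon (\<lambda>_. (0,0))"
  by (simp only: Nf_zero[symmetric] Mon_Nf)

lemma lookup_X_zero: "Poly_Mapping.lookup (X i * s) (0 :: 'n::finite smon) = (0::'k::comm_ring_1)"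
  by (simp add: zero_Mon lookup_X_left)

lemma lookup_EE0: "Poly_Mapping.lookup (EE :: ('n::finite,'k::comm_ring_1) S) 0 = 1"
proof -
  have "Poly_Mapping.lookup (prod_list (map ee L) :: ('n,'k) S) 0 = 1" for L
  proof (induction L)
    case Nil then show ?case by simp
  next
    case (Cons j L)
    have "ee j * prod_list (map ee L) = prod_list (map ee L) - X j * (Y j * prod_list (map ee L) :: ('n,'k) S)"
      by (simp add: ee_def algebra_simps mult.assoc)
    then show ?case using Cons by (simp add: lookup_minus lookup_X_zero)
  qed
  then show ?thesis by (simp add: EE_def)
qed

lemma EE_nonzero: "(EE :: ('n::finite,'k::comm_ring_1) S) \<noteq> 0"
proof
  assume "(EE :: ('n,'k) S) = 0"
  then have "Poly_Mapping.lookup (EE :: ('n,'k) S) 0 = 0" by simp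
  then show False using lookup_EE0[where 'n='n and 'k='k] by simp
qed

lemma EE_mono: "EE * Poly_Mapping.single m c * EE = (if m = 0 then Poly_Mapping.single 0 c * EE else (0 :: ('n::finite,'k::comm_ring_1) S))"
proof (cases "m = 0")
  case True
  then show ?thesis by (simp add: single_central[symmetric] EE_idem mult.assoc)
next
  case False
  then have "Nf m \<noteq> (\<lambda>_. (0,0))" by (simp add: Nf_inj Nf_zero[symmetric])
  then obtain k where k: "Nf m k \<noteq> (0,0)" by auto
  show ?thesis
  proof (cases "0 < fst (Nf m k)")
    case True
    let ?m' = "Mon ((Nf m)(k := (fst (Nf m k) - 1, snd (Nf m k))))"
    have "letter (k, True) + ?m' = Mon (Nf m)" using True by (subst xl_left_char) simp
    then have "Poly_Mapping.single m c = X k * Poly_Mapping.single ?m' (c::'k)"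
      by (simp add: X_def mult_single)
    then show ?thesis using False by (simp add: EE_X flip: mult.assoc)
  next
    case F2: False
    then have sp: "0 < snd (Nf m k)" using k by (cases "Nf m k") auto
    let ?m' = "Mon ((Nf m)(k := (fst (Nf m k), snd (Nf m k) - 1)))"
    have "?m' + letter (k, False) = Mon (Nf m)" using sp by (subst yl_right_char) simp
    then have "Poly_Mapping.single m c = Poly_Mapping.single ?m' (c::'k) * Y k"
      by (simp add: Y_def mult_single)
    then show ?thesis using False by (simp add: Y_EE mult.assoc)
  qed
qed

lemma EE_sandwich: "EE * f * EE = Poly_Mapping.single 0 (Poly_Mapping.lookup f 0) * (EE :: ('n::finite,'k::comm_ring_1) S)"
proof (induction f rule: pm_induct)
  case zero then show ?case by simp
next
  case (single m c) then show ?case by (simp add: EE_mono lookup_single when_def)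
next
  case (add f g) then show ?case by (simp add: distrib_left distrib_right lookup_add single_add)
qed

lemma lookup_two_sided:
  fixes f :: "('n::finite,'k::comm_ring_1) S"
  shows "Poly_Mapping.lookup (Poly_Mapping.single u 1 * f * Poly_Mapping.single w 1) 0
     = Sum_any (\<lambda>m. Poly_Mapping.lookup f m when u + m + w = (0 :: 'n::finite smon))"
  (is "?L f = ?R f")
proof (induction f rule: pm_induct)
  case zero then show ?case by simp
next
  case (single m c)
  have "?L (Poly_Mapping.single m c) = (c when u + m + w = 0)"
    by (simp add: mult_single lookup_single)
  also have "\<dots> = ?R (Poly_Mapping.single m c)"
    by (subst Sum_any_one[of m]) (auto simp: lookup_single when_def)
  finally show ?case .
next
  case (add f g)
  have ff: "finite {m. (Poly_Mapping.lookup f m when u + m + w = 0) \<noteq> 0}"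
    by (rule finite_subset[of _ "Poly_Mapping.keys f"]) (auto simp: in_keys_iff)
  have fg: "finite {m. (Poly_Mapping.lookup g m when u + m + w = 0) \<noteq> 0}"
    by (rule finite_subset[of _ "Poly_Mapping.keys g"]) (auto simp: in_keys_iff)
  have "?R (f + g) = ?R f + ?R g"
    by (simp add: lookup_add when_add_distrib Sum_any.distrib[OF ff fg])
  with add show ?case by (simp add: distrib_left distrib_right lookup_add)
qed

lemma bm_zero_char: "bm (bm (0, a) x) (b, 0) = (0,0) \<longleftrightarrow> fst x \<le> a \<and> a - fst x + snd x = b"
  by (cases x) (auto simp: bm_def)

lemma g_EE_nonzero:
  fixes g :: "('n::finite,'k::comm_ring_1) S \<Rightarrow> ('n,'k) S"
  assumes ag: "alg_endo g" and sg: "is_sigma p g"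
  shows "g EE \<noteq> 0"
proof -
  have gX: "g (X i) = X i" and gY: "g (Y i) = AA p i" for i using sg by (auto simp: is_sigma_AA)
  have ge: "g (ee i) = 1 - X i * AA p i" for i
    by (simp add: ee_def alg_endo_diff[OF ag] alg_endo_mult[OF ag] alg_endo_one[OF ag] gX gY)
  have Ege: "EE * g (ee i) = EE" for i
    by (simp add: ge right_diff_distrib EE_X flip: mult.assoc)
  have "EE * prod_list (map (\<lambda>i. g (ee i)) L) = EE" for L
    by (induction L) (simp_all add: Ege flip: mult.assoc)
  moreover have "g EE = prod_list (map (\<lambda>i. g (ee i)) idx_list)"
    by (simp add: EE_def alg_endo_prod_list[OF ag] comp_def)
  ultimately have "EE * g EE = EE" by simp
  then show ?thesis using EE_nonzero by force
qed

lemma inj_sigma: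
  fixes g :: "('n::finite,'k::field) S \<Rightarrow> ('n,'k) S"
  assumes ag: "alg_endo g" and sg: "is_sigma p g"
  shows "inj g"
proof -
  have ker: "f = 0" if gf: "g f = 0" for f
  proof (rule ccontr)
    assume f0: "f \<noteq> 0"
    define \<mu> where "\<mu> m = (\<Sum>k\<in>UNIV. fst (Nf m k))" for m :: "'n smon"
    obtain m1 where "m1 \<in> Poly_Mapping.keys f" using f0 by (metis keys_eq_empty ex_in_conv)
    then obtain m0 where m0: "m0 \<in> Poly_Mapping.keys f" and mini: "\<And>m. m \<in> Poly_Mapping.keys f \<Longrightarrow> \<mu> m0 \<le> \<mu> m"
      using ex_has_least_nat[of "\<lambda>m. m \<in> Poly_Mapping.keys f" m1 \<mu>] by blast
    define v0 where "v0 = Nf m0"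
    define u where "u = Mon (\<lambda>k. (0, fst (v0 k)))"
    define w where "w = Mon (\<lambda>k. (snd (v0 k), 0))"
    have cond: "(u + m + w = 0) \<longleftrightarrow> (\<forall>k. fst (Nf m k) \<le> fst (v0 k) \<and> fst (v0 k) - fst (Nf m k) + snd (Nf m k) = snd (v0 k))" for m
    proof -
      have "(u + m + w = 0) \<longleftrightarrow> Nf (u + m + w) = Nf 0" by (simp add: Nf_inj)
      also have "\<dots> \<longleftrightarrow> (\<forall>k. bm (bm (0, fst (v0 k)) (Nf m k)) (snd (v0 k), 0) = (0,0))"
        by (simp add: Nf_plus Nf_zero u_def w_def fun_eq_iff)
      finally show ?thesis by (simp add: bm_zero_char)
    qed
    have uniq: "m = m0" if mk: "m \<in> Poly_Mapping.keys f" and c0: "u + m + w = 0" for m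
    proof (rule ccontr)
      assume "m \<noteq> m0"
      then have "Nf m \<noteq> v0" by (simp add: v0_def Nf_inj)
      then obtain k where k: "Nf m k \<noteq> v0 k" by auto
      have le: "\<forall>k. fst (Nf m k) \<le> fst (v0 k)" and eq: "\<forall>k. fst (v0 k) - fst (Nf m k) + snd (Nf m k) = snd (v0 k)"
        using c0 cond by auto
      have "fst (Nf m k) \<noteq> fst (v0 k)"
      proof
        assume a: "fst (Nf m k) = fst (v0 k)"
        then have "snd (Nf m k) = snd (v0 k)" using eq by (metis add_0 diff_self_eq_0)
        with a k show False by (simp add: prod_eq_iff)
      qed
      then have "fst (Nf m k) < fst (v0 k)" using le by (simp add: order_le_neq_trans)
      then have "\<mu> m < \<mu> m0" unfolding \<mu>_def v0_def
        by (intro sum_strict_mono_ex1) (use le v0_def in auto)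
      with mini[OF mk] show False by simp
    qed
    have self: "u + m0 + w = 0" by (simp add: cond v0_def)
    define c where "c = Poly_Mapping.lookup f m0"
    have c0: "c \<noteq> 0" using m0 by (simp add: c_def in_keys_iff)
    have coef: "Poly_Mapping.lookup (Poly_Mapping.single u 1 * f * Poly_Mapping.single w 1) 0 = c"
    proof -
      have "Poly_Mapping.lookup (Poly_Mapping.single u 1 * f * Poly_Mapping.single w 1) 0
          = (Poly_Mapping.lookup f m0 when u + m0 + w = 0)"
        unfolding lookup_two_sided
      proof (rule Sum_any_one)
        fix m assume "m \<noteq> m0"
        then show "(Poly_Mapping.lookup f m when u + m + w = 0) = 0"
          using uniq by (cases "m \<in> Poly_Mapping.keys f") (auto simp: in_keys_iff when_def)
      qed
      then show ?thesis using self by (simp add: c_def)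
    qed
    let ?T = "Poly_Mapping.single u 1 * f * Poly_Mapping.single w (1::'k)"
    have gT: "g ?T = 0" by (simp add: alg_endo_mult[OF ag] gf)
    have "EE * ?T * EE = Poly_Mapping.single 0 c * EE" by (simp add: EE_sandwich coef)
    then have "g (Poly_Mapping.single 0 c * EE) = 0"
      by (metis alg_endo_mult[OF ag] gT mult_zero_left mult_zero_right)
    then have "Poly_Mapping.single 0 c * g EE = 0"
      by (simp add: sscal_eq[symmetric] alg_endo_sscal[OF ag])
    then have "Poly_Mapping.single 0 (inverse c) * (Poly_Mapping.single 0 c * g EE) = 0" by simp
    then have "g EE = 0" using c0 by (simp add: mult.assoc[symmetric] mult_single)
    with g_EE_nonzero[OF ag sg] show False by simp
  qed
  show ?thesis
  proof (rule injI)
    fix a b assume "g a = g b"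
    then have "g (a - b) = 0" by (simp add: alg_endo_diff[OF ag])
    then have "a - b = 0" by (rule ker)
    then show "a = b" by simp
  qed
qed


section \<open>Leading terms\<close>

lemma lead_upper:
  fixes f g :: "'a::{ordered_cancel_comm_monoid_add, linorder} \<Rightarrow>\<^sub>0 'b::semiring_0"
  assumes "f \<noteq> 0" "g \<noteq> 0" "k \<in> Poly_Mapping.keys (f * g)"
  shows "k \<le> Max (Poly_Mapping.keys f) + Max (Poly_Mapping.keys g)"
proof (rule ccontr)
  assume nk: "\<not> ?thesis"
  have "Poly_Mapping.lookup (f * g) k = 0"
    unfolding lookup_mult
  proof (rule Sum_any_none)
    fix l
    show "Poly_Mapping.lookup f l * (\<Sum>q. Poly_Mapping.lookup g q when k = l + q) = 0"
    proof (cases "l \<in> Poly_Mapping.keys f")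
      case False then show ?thesis by (simp add: in_keys_iff)
    next
      case True
      have "(\<Sum>q. Poly_Mapping.lookup g q when k = l + q) = 0"
      proof (rule Sum_any_none)
        fix q
        show "(Poly_Mapping.lookup g q when k = l + q) = 0"
        proof (cases "q \<in> Poly_Mapping.keys g")
          case False then show ?thesis by (simp add: in_keys_iff)
        next
          case True
          have "l \<le> Max (Poly_Mapping.keys f)" using \<open>l \<in> _\<close> by simp
          moreover have "q \<le> Max (Poly_Mapping.keys g)" using True by simp
          ultimately have "l + q \<le> Max (Poly_Mapping.keys f) + Max (Poly_Mapping.keys g)" by (rule add_mono)
          then show ?thesis using nk by (auto simp: when_def)
        qed
      qed
      then show ?thesis by simp
    qed
  qed
  with assms(3) show False by (simp add: in_keys_iff)
qed

lemma lead_coeff: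
  fixes f g :: "'a::{ordered_cancel_comm_monoid_add, linorder} \<Rightarrow>\<^sub>0 'b::semiring_0"
  assumes f0: "f \<noteq> 0" and g0: "g \<noteq> 0"
  shows "Poly_Mapping.lookup (f * g) (Max (Poly_Mapping.keys f) + Max (Poly_Mapping.keys g))
     = Poly_Mapping.lookup f (Max (Poly_Mapping.keys f)) * Poly_Mapping.lookup g (Max (Poly_Mapping.keys g))"
proof -
  let ?Mf = "Max (Poly_Mapping.keys f)" and ?Mg = "Max (Poly_Mapping.keys g)"
  have inner: "(\<Sum>q. Poly_Mapping.lookup g q when ?Mf + ?Mg = l + q) = 0" if "l \<in> Poly_Mapping.keys f" "l \<noteq> ?Mf" for l
  proof (rule Sum_any_none)
    fix q
    show "(Poly_Mapping.lookup g q when ?Mf + ?Mg = l + q) = 0"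
    proof (cases "q \<in> Poly_Mapping.keys g")
      case False then show ?thesis by (simp add: in_keys_iff)
    next
      case True
      have "l < ?Mf" using that by (simp add: order_le_neq_trans)
      moreover have "q \<le> ?Mg" using True by simp
      ultimately have "l + q < ?Mf + ?Mg" by (rule add_less_le_mono)
      then show ?thesis by (auto simp: when_def)
    qed
  qed
  have "Poly_Mapping.lookup (f * g) (?Mf + ?Mg)
      = Poly_Mapping.lookup f ?Mf * (\<Sum>q. Poly_Mapping.lookup g q when ?Mf + ?Mg = ?Mf + q)"
    unfolding lookup_mult
  proof (rule Sum_any_one)
    fix l assume "l \<noteq> ?Mf"
    then show "Poly_Mapping.lookup f l * (\<Sum>q. Poly_Mapping.lookup g q when ?Mf + ?Mg = l + q) = 0"
      using inner by (cases "l \<in> Poly_Mapping.keys f") (auto simp: in_keys_iff)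
  qed
  also have "(\<Sum>q. Poly_Mapping.lookup g q when ?Mf + ?Mg = ?Mf + q) = Poly_Mapping.lookup g ?Mg"
    by (subst Sum_any_one[of ?Mg]) (auto simp: when_def)
  finally show ?thesis .
qed

lemma Max_keys_in: "f \<noteq> 0 \<Longrightarrow> Max (Poly_Mapping.keys f) \<in> Poly_Mapping.keys f"
  by (rule Max_in) auto

lemma lead_mult:
  fixes f g :: "'a::{ordered_cancel_comm_monoid_add, linorder} \<Rightarrow>\<^sub>0 'b::{semiring_0, semiring_no_zero_divisors}"
  assumes f0: "f \<noteq> 0" and g0: "g \<noteq> 0"
  shows "f * g \<noteq> 0" "Max (Poly_Mapping.keys (f * g)) = Max (Poly_Mapping.keys f) + Max (Poly_Mapping.keys g)"
    "Poly_Mapping.lookup (f * g) (Max (Poly_Mapping.keys (f * g))) = Poly_Mapping.lookup f (Max (Poly_Mapping.keys f)) * Poly_Mapping.lookup g (Max (Poly_Mapping.keys g))"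
proof -
  let ?M = "Max (Poly_Mapping.keys f) + Max (Poly_Mapping.keys g)"
  have nz: "Poly_Mapping.lookup (f * g) ?M \<noteq> 0"
    using lead_coeff[OF f0 g0] Max_keys_in[OF f0] Max_keys_in[OF g0] by (simp add: in_keys_iff)
  then show fg: "f * g \<noteq> 0" by auto
  have "?M \<in> Poly_Mapping.keys (f * g)" using nz by (simp add: in_keys_iff)
  moreover have "\<forall>k\<in>Poly_Mapping.keys (f * g). k \<le> ?M" using lead_upper[OF f0 g0] by blast
  ultimately show M: "Max (Poly_Mapping.keys (f * g)) = ?M"
    by (intro Max_eqI) auto
  show "Poly_Mapping.lookup (f * g) (Max (Poly_Mapping.keys (f * g))) = Poly_Mapping.lookup f (Max (Poly_Mapping.keys f)) * Poly_Mapping.lookup g (Max (Poly_Mapping.keys g))"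
    by (simp only: M lead_coeff[OF f0 g0])
qed

lemma pm_nat_zero_le: "(0 :: nat \<Rightarrow>\<^sub>0 nat) \<le> a"
proof (cases "a = 0")
  case False
  then have "\<exists>k. Poly_Mapping.lookup a k \<noteq> 0" by (auto simp: poly_mapping_eq_iff fun_eq_iff)
  then obtain k where k: "Poly_Mapping.lookup a k \<noteq> 0" by blast
  define k0 where "k0 = (LEAST k. Poly_Mapping.lookup a k \<noteq> 0)"
  have "Poly_Mapping.lookup a k0 \<noteq> 0" unfolding k0_def by (rule LeastI[of "\<lambda>k. Poly_Mapping.lookup a k \<noteq> 0" k, OF k])
  moreover have "\<forall>k'<k0. Poly_Mapping.lookup a k' = 0" unfolding k0_def using not_less_Least by blast
  ultimately have "less_fun (Poly_Mapping.lookup 0) (Poly_Mapping.lookup a)"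
    unfolding less_fun_def by (intro exI[of _ k0]) auto
  then show ?thesis by (simp add: less_eq_poly_mapping.rep_eq)
qed simp

lemma pm_nat_single_pos: "(0 :: nat \<Rightarrow>\<^sub>0 nat) < Poly_Mapping.single j 1"
proof -
  have "less_fun (Poly_Mapping.lookup 0) (Poly_Mapping.lookup (Poly_Mapping.single j (1::nat)))"
    unfolding less_fun_def by (intro exI[of _ j]) (auto simp: lookup_single when_def)
  then show ?thesis by (simp add: less_poly_mapping.rep_eq)
qed

lemma unit_lemma_nat:
  fixes P Q :: "(nat \<Rightarrow>\<^sub>0 nat) \<Rightarrow>\<^sub>0 'k::field"
  assumes eq: "P + Q = Q * Poly_Mapping.single (Poly_Mapping.single j 1) 1 * P"
  shows "P = 0"
proof (rule ccontr)
  assume P0: "P \<noteq> 0"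
  let ?e = "Poly_Mapping.single j (1::nat)"
  let ?E = "Poly_Mapping.single ?e (1::'k)"
  have Q0: "Q \<noteq> 0"
  proof
    assume "Q = 0" then show False using eq P0 by simp
  qed
  have E0: "?E \<noteq> 0"
  proof
    assume "?E = 0"
    then have "Poly_Mapping.lookup ?E ?e = 0" by simp
    then show False by simp
  qed
  have ME: "Max (Poly_Mapping.keys ?E) = ?e" by simp
  have QE0: "Q * ?E \<noteq> 0" and MQE: "Max (Poly_Mapping.keys (Q * ?E)) = Max (Poly_Mapping.keys Q) + ?e"
    using lead_mult[OF Q0 E0] ME by simp_all
  have QEP0: "Q * ?E * P \<noteq> 0" and MQEP: "Max (Poly_Mapping.keys (Q * ?E * P)) = Max (Poly_Mapping.keys Q) + ?e + Max (Poly_Mapping.keys P)"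
    using lead_mult[OF QE0 P0] MQE by simp_all
  let ?M = "Max (Poly_Mapping.keys Q) + ?e + Max (Poly_Mapping.keys P)"
  have mk: "?M \<in> Poly_Mapping.keys (Q * ?E * P)" using Max_keys_in[OF QEP0] by (simp only: MQEP)
  have "?M \<in> Poly_Mapping.keys (P + Q)" by (subst eq) (rule mk)
  then have "?M \<in> Poly_Mapping.keys P \<union> Poly_Mapping.keys Q" by (rule subsetD[OF keys_add])
  then have "?M \<in> Poly_Mapping.keys P \<or> ?M \<in> Poly_Mapping.keys Q" by (rule UnE) simp_all
  moreover have "Max (Poly_Mapping.keys P) < ?M"
  proof -
    have "0 < Max (Poly_Mapping.keys Q) + ?e"
      using add_le_less_mono[OF pm_nat_zero_le pm_nat_single_pos] by simp
    then have "0 + Max (Poly_Mapping.keys P) < Max (Poly_Mapping.keys Q) + ?e + Max (Poly_Mapping.keys P)"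
      by (rule add_strict_right_mono)
    then show ?thesis by simp
  qed
  moreover have "Max (Poly_Mapping.keys Q) < ?M"
  proof -
    have "Max (Poly_Mapping.keys Q) + 0 < Max (Poly_Mapping.keys Q) + ?e"
      by (rule add_strict_left_mono[OF pm_nat_single_pos])
    also have "\<dots> = Max (Poly_Mapping.keys Q) + ?e + 0" by simp
    also have "\<dots> \<le> ?M" by (rule add_left_mono[OF pm_nat_zero_le])
    finally show ?thesis by simp
  qed
  ultimately show False using Max_ge[of "Poly_Mapping.keys P" ?M] Max_ge[of "Poly_Mapping.keys Q" ?M]
    by (auto simp: not_le[symmetric])
qed

definition rn :: "('n::finite \<Rightarrow> nat) \<Rightarrow> ('n \<Rightarrow>\<^sub>0 nat) \<Rightarrow> (nat \<Rightarrow>\<^sub>0 nat)" where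
  "rn \<iota> \<alpha> = (\<Sum>k\<in>UNIV. Poly_Mapping.single (\<iota> k) (Poly_Mapping.lookup \<alpha> k))"

lemma lookup_rn: "inj \<iota> \<Longrightarrow> Poly_Mapping.lookup (rn \<iota> \<alpha>) (\<iota> k) = Poly_Mapping.lookup \<alpha> k"
proof -
  assume inj: "inj \<iota>"
  have "Poly_Mapping.lookup (rn \<iota> \<alpha>) (\<iota> k) = (\<Sum>k'\<in>UNIV. if k' = k then Poly_Mapping.lookup \<alpha> k' else 0)"
    unfolding rn_def lookup_sum using inj by (intro sum.cong) (auto simp: lookup_single when_def inj_eq)
  also have "\<dots> = Poly_Mapping.lookup \<alpha> k" by simp
  finally show ?thesis .
qed

lemma rn_add: "rn \<iota> (\<alpha> + \<beta>) = rn \<iota> \<alpha> + rn \<iota> \<beta>"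
  by (simp add: rn_def lookup_add single_add sum.distrib)

lemma inj_rn: "inj \<iota> \<Longrightarrow> inj (rn \<iota>)"
proof (rule injI)
  fix a b assume inj: "inj \<iota>" and e: "rn \<iota> a = rn \<iota> b"
  show "a = b"
  proof (rule poly_mapping_eqI)
    fix k
    have "Poly_Mapping.lookup (rn \<iota> a) (\<iota> k) = Poly_Mapping.lookup (rn \<iota> b) (\<iota> k)" using e by simp
    then show "Poly_Mapping.lookup a k = Poly_Mapping.lookup b k" using inj by (simp add: lookup_rn)
  qed
qed

lemma rn_single: "rn \<iota> (Poly_Mapping.single i 1) = Poly_Mapping.single (\<iota> i) 1"
proof -
  have "rn \<iota> (Poly_Mapping.single i 1) = (\<Sum>k\<in>UNIV. if k = i then Poly_Mapping.single (\<iota> i) 1 else 0)"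
    unfolding rn_def by (intro sum.cong) (auto simp: lookup_single when_def)
  also have "\<dots> = Poly_Mapping.single (\<iota> i) 1" by simp
  finally show ?thesis .
qed

lemma unit_lemma:
  fixes p q :: "('n::finite, 'k::field) P"
  assumes eq: "p + q - q * Poly_Mapping.single (Poly_Mapping.single i 1) 1 * p = 0"
  shows "p = 0"
proof -
  obtain \<iota> :: "'n \<Rightarrow> nat" where inj: "inj \<iota>"
    using finite_imp_inj_to_nat_seg[of "UNIV :: 'n set"] by auto
  let ?r = "pmap (rn \<iota>) :: ('n, 'k) P \<Rightarrow> _"
  have injr: "inj (rn \<iota>)" by (rule inj_rn[OF inj])
  have x: "?r (Poly_Mapping.single (Poly_Mapping.single i 1) 1) = Poly_Mapping.single (Poly_Mapping.single (\<iota> i) 1) 1"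
    by (simp only: pmap_single[OF injr] rn_single)
  have "?r (p + q - q * Poly_Mapping.single (Poly_Mapping.single i 1) 1 * p) = 0" using eq by simp
  then have "?r p + ?r q - ?r q * ?r (Poly_Mapping.single (Poly_Mapping.single i 1) 1) * ?r p = 0"
    by (simp only: pmap_diff[OF injr] pmap_add[OF injr] pmap_mult[OF injr rn_add])
  then have "?r p + ?r q - ?r q * Poly_Mapping.single (Poly_Mapping.single (\<iota> i) 1) 1 * ?r p = 0"
    by (simp only: x)
  then have "?r p + ?r q = ?r q * Poly_Mapping.single (Poly_Mapping.single (\<iota> i) 1) 1 * ?r p" by simp
  then have r0: "?r p = 0" by (rule unit_lemma_nat)
  show "p = 0"
  proof (rule poly_mapping_eqI)
    fix \<alpha>
    have "Poly_Mapping.lookup p \<alpha> = Poly_Mapping.lookup (?r p) (rn \<iota> \<alpha>)" using injr by simp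
    then show "Poly_Mapping.lookup p \<alpha> = Poly_Mapping.lookup 0 \<alpha>" using r0 by simp
  qed
qed

section \<open>Non-surjectivity\<close>

lemma inv_alg_endo:
  fixes g :: "('n::finite,'k::comm_ring_1) S \<Rightarrow> ('n,'k) S"
  assumes ag: "alg_endo g" and b: "bij g"
  shows "alg_endo (inv g)"
proof -
  have gi: "g (inv g y) = y" for y using b by (simp add: bij_is_surj surj_f_inv_f)
  have ig: "inv g (g x) = x" for x using b by (simp add: bij_is_inj inv_f_f)
  have "inv g (a + b) = inv g a + inv g b" for a b
    by (metis gi ig alg_endo_add[OF ag])
  moreover have "inv g (sscal c a) = sscal c (inv g a)" for c a
    by (metis gi ig alg_endo_sscal[OF ag])
  moreover have "inv g (a * b) = inv g a * inv g b" for a b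
    by (metis gi ig alg_endo_mult[OF ag])
  moreover have "inv g 1 = 1" by (metis ig alg_endo_one[OF ag])
  ultimately show ?thesis by (simp add: alg_endo_def)
qed

lemma st_not_bij:
  fixes g :: "('n::finite,'k::field) S \<Rightarrow> ('n,'k) S"
  assumes g: "g \<in> st" and gid: "g \<noteq> id"
  shows "\<not> bij g"
proof
  assume b: "bij g"
  obtain p where sg: "is_sigma p g" and ag: "alg_endo g" using st_sigma[OF g] by blast
  have gX: "g (X i) = X i" for i using sg by (simp add: is_sigma_def)
  have ig: "inv g (g x) = x" for x using b by (simp add: bij_is_inj inv_f_f)
  have gi: "g (inv g y) = y" for y using b by (simp add: bij_is_surj surj_f_inv_f)
  have hst: "inv g \<in> st"
    using inv_alg_endo[OF ag b] ig[of "X _"] by (simp add: st_def gX)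
  obtain q where sh: "is_sigma q (inv g)" and ah: "alg_endo (inv g)" using st_sigma[OF hst] by blast
  have p0: "p i = 0" for i
  proof -
    have "g (inv g (Y i)) = Y i + (emb (p i) + emb (q i) - emb (q i) * X i * emb (p i)) * ee i"
      by (rule comp_Y[OF ag sg sh])
    then have "(emb (p i) + emb (q i) - emb (q i) * X i * emb (p i)) * ee i = 0" by (simp add: gi)
    then have "emb (p i + q i - q i * Poly_Mapping.single (Poly_Mapping.single i 1) 1 * p i) * ee i = 0"
      by (simp only: emb_add emb_diff emb_mult emb_x)
    then have "p i + q i - q i * Poly_Mapping.single (Poly_Mapping.single i 1) 1 * p i = 0"
      by (rule emb_ee_zero1)
    then show ?thesis by (rule unit_lemma)
  qed
  have "g = id"
  proof (rule alg_endo_unique[OF ag alg_endo_id])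
    show "g (X i) = id (X i)" for i by (simp add: gX)
    show "g (Y i) = id (Y i)" for i using sg p0 by (simp add: is_sigma_def)
  qed
  with gid show False by simp
qed

theorem corollary10p1:
  fixes K_witness :: "'k::field_char_0" and n_witness :: "'n::finite"
  shows "(id \<in> (st :: (('n, 'k) S \<Rightarrow> ('n, 'k) S) set))
    \<and> (\<forall>g\<in>(st :: (('n, 'k) S \<Rightarrow> ('n, 'k) S) set). \<forall>h\<in>st. g \<circ> h \<in> st \<and> g \<circ> h = h \<circ> g)
    \<and> (\<forall>g\<in>(st :: (('n, 'k) S \<Rightarrow> ('n, 'k) S) set). g \<noteq> id \<longrightarrow> inj g \<and> \<not> bij g)
    \<and> (\<forall>p :: 'n \<Rightarrow> ('n, 'k) P. st_cond p \<longrightarrow> (\<exists>!g. alg_endo g \<and> is_sigma p g))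
    \<and> (st :: (('n, 'k) S \<Rightarrow> ('n, 'k) S) set) = {g. alg_endo g \<and> (\<exists>p. st_cond p \<and> is_sigma p g)}"
proof (intro conjI ballI allI impI)
  show "id \<in> (st :: (('n, 'k) S \<Rightarrow> ('n, 'k) S) set)" by (simp add: st_def alg_endo_id)
  fix g h :: "('n, 'k) S \<Rightarrow> ('n, 'k) S"
  assume g: "g \<in> st" and h: "h \<in> st"
  show "g \<circ> h \<in> st" by (rule st_comp[OF g h])
  show "g \<circ> h = h \<circ> g" by (rule st_comm[OF g h])
next
  fix g :: "('n, 'k) S \<Rightarrow> ('n, 'k) S"
  assume g: "g \<in> st" and gid: "g \<noteq> id"
  obtain p where sg: "is_sigma p g" and ag: "alg_endo g" using st_sigma[OF g] by blast
  show "inj g" by (rule inj_sigma[OF ag sg])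
  show "\<not> bij g" by (rule st_not_bij[OF g gid])
next
  fix p :: "'n \<Rightarrow> ('n, 'k) P"
  assume "st_cond p"
  then show "\<exists>!g. alg_endo g \<and> is_sigma p g" by (rule sigma_exists_unique)
next
  show "(st :: (('n, 'k) S \<Rightarrow> ('n, 'k) S) set) = {g. alg_endo g \<and> (\<exists>p. st_cond p \<and> is_sigma p g)}"
    by (rule st_char)
qed


end
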